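(* Let $v$ be bounded, $N\ge2$, $\zeta_l,\zeta_r>0$, and assume $\alpha_{in}^l\alpha_{out}^r-\alpha_{out}^l\alpha_{in}^r>0$. Let $C'=3+\max\{\zeta_l,\zeta_r,1\}$, $\|v\|=\sup_n|v(n)|$, and fix $\epsilon>4\|v\|C'$. Then with $\beta=\epsilon N$, $$\mathcal{J}_{\epsilon N}(N)\ge\frac{4(\alpha_{in}^l\alpha_{out}^r-\alpha_{out}^l\alpha_{in}^r)}{\zeta_l+\zeta_r+\zeta_l\zeta_r\big(\zeta_l+\zeta_r+\epsilon N(N-1)\big)}\left(\frac12-\frac{2\|v\|C'}{\epsilon}\right)>0.$$
   Context: Let $v:\mathbb{N}\to\mathbb{R}$ be bounded, $e_1,\dots,e_N$ the standard basis of $\mathbb{C}^N$, $p_n=|e_n\rangle\langle e_n|$, $h$ the Hermitian matrix $(h\psi)(n)=-\psi(n+1)-\psi(n-1)+v(n)\psi(n)$, $n=1,\dots,N$, $\psi(0)=\psi(N+1)=0$. Let $\alpha_{in}^l,\alpha_{out}^l,\alpha_{in}^r,\alpha_{out}^r\ge0$, $\zeta_l=\alpha_{in}^l+\alpha_{out}^l$, $\zeta_r=\alpha_{in}^r+\alpha_{out}^r$. For $\beta\ge0$ define $l_\beta(a)=-i[h,a]-\{\zeta_lp_1+\zeta_rp_N,a\}+\beta\left(\sum_{n=1}^Np_nap_n-a\right)$ on $M_N(\mathbb{C})$, $R_\infty^{(\beta)}=\int_0^\infty e^{sl_\beta}(2\alpha_{in}^lp_1+2\alpha_{in}^rp_N)\,ds$,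 and $\mathcal{J}_\beta(N)=2\,\mathrm{Im}\langle e_2,R^{(\beta)}_\infty e_1\rangle$. *)

theory Defs
  imports "HOL-Analysis.Analysis"
begin

text \<open>Matrices in M_N(C) are represented as functions nat => nat => complex,
  with 1-based indices 1..N (entries outside {1..N}^2 are irrelevant / zero).
  The standard basis vector e_n corresponds to index n, so
  <e_i, A e_j> = A i j.\<close>

type_synonym cmat = "nat \<Rightarrow> nat \<Rightarrow> complex"

definition mmul :: "nat \<Rightarrow> cmat \<Rightarrow> cmat \<Rightarrow> cmat" where
  "mmul N A B = (\<lambda>i j. \<Sum>k\<in>{1..N}. A i k * B k j)"

text \<open>The Hermitian matrix h: (h psi)(n) = -psi(n+1) - psi(n-1) + v(n) psi(n),
  Dirichlet boundary conditions psi(0) = psi(N+1) = 0.\<close>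
definition hmat :: "nat \<Rightarrow> (nat \<Rightarrow> real) \<Rightarrow> cmat" where
  "hmat N v = (\<lambda>i j. if i \<in> {1..N} \<and> j \<in> {1..N} then
      (if i = j then complex_of_real (v i) else if i = j + 1 \<or> j = i + 1 then -1 else 0)
    else 0)"

definition proj :: "nat \<Rightarrow> cmat" where
  "proj n = (\<lambda>i j. if i = n \<and> j = n then 1 else 0)"

definition lind :: "nat \<Rightarrow> (nat \<Rightarrow> real) \<Rightarrow> real \<Rightarrow> real \<Rightarrow> real \<Rightarrow> cmat \<Rightarrow> cmat" where
  "lind N v zl zr \<beta> a =
    (let H = hmat N v;
         G = (\<lambda>i j. complex_of_real zl * proj 1 i j + complex_of_real zr * proj N i j)
     in (\<lambda>i j. - \<i> * (mmul N H a i j - mmul N a H i j)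
               - (mmul N G a i j + mmul N a G i j)
               + complex_of_real \<beta> *
                   ((\<Sum>n\<in>{1..N}. mmul N (mmul N (proj n) a) (proj n) i j) - a i j)))"

definition expL :: "nat \<Rightarrow> (nat \<Rightarrow> real) \<Rightarrow> real \<Rightarrow> real \<Rightarrow> real \<Rightarrow> real \<Rightarrow> cmat \<Rightarrow> cmat" where
  "expL N v zl zr \<beta> s a =
    (\<lambda>i j. \<Sum>k. complex_of_real (s ^ k / fact k) * ((lind N v zl zr \<beta> ^^ k) a i j))"

definition Rinf :: "nat \<Rightarrow> (nat \<Rightarrow> real) \<Rightarrow> real \<Rightarrow> real \<Rightarrow> real \<Rightarrow> real \<Rightarrow> real \<Rightarrow> cmat" where
  "Rinf N v ail aol air aor \<beta> =
    (let zl = ail + aol; zr = air + aor;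
         a0 = (\<lambda>i j. complex_of_real (2 * ail) * proj 1 i j + complex_of_real (2 * air) * proj N i j)
     in (\<lambda>i j. integral {0..} (\<lambda>s. expL N v zl zr \<beta> s a0 i j)))"

definition Jcur :: "nat \<Rightarrow> (nat \<Rightarrow> real) \<Rightarrow> real \<Rightarrow> real \<Rightarrow> real \<Rightarrow> real \<Rightarrow> real \<Rightarrow> real" where
  "Jcur N v ail aol air aor \<beta> = 2 * Im (Rinf N v ail aol air aor \<beta> 2 1)"

definition vnorm :: "(nat \<Rightarrow> real) \<Rightarrow> real" where
  "vnorm v = (SUP n\<in>{1..}. \<bar>v n\<bar>)"

end

theory Submission
  imports Defs
begin

definition Em :: "nat \<Rightarrow> nat \<Rightarrow> cmat" where
  "Em k m = (\<lambda>i j. if i = k \<and> j = m then 1 else 0)"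

definition gg :: "nat \<Rightarrow> real \<Rightarrow> real \<Rightarrow> nat \<Rightarrow> real" where
  "gg N zl zr i = (if i = 1 then zl else 0) + (if i = N then zr else 0)"

lemma if01L: "(if P then (1::complex) else 0) * x = (if P then x else 0)" by simp
lemma if01R: "x * (if P then (1::complex) else 0) = (if P then x else 0)" by simp

lemma mmul_G:
  assumes "i \<in> {1..N}" "j \<in> {1..N}" "N \<ge> 1"
  shows "mmul N (\<lambda>i j. complex_of_real zl * proj 1 i j + complex_of_real zr * proj N i j) a i j
     = complex_of_real (gg N zl zr i) * a i j"
proof -
  have "mmul N (\<lambda>i j. complex_of_real zl * proj 1 i j + complex_of_real zr * proj N i j) a i j
     = (\<Sum>k\<in>{1..N}. (if k = 1 then complex_of_real zl * (if i = 1 then a 1 j else 0) else 0))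
      + (\<Sum>k\<in>{1..N}. (if k = N then complex_of_real zr * (if i = N then a N j else 0) else 0))"
    unfolding mmul_def proj_def sum.distrib[symmetric]
    by (rule sum.cong) (auto simp: distrib_right)
  also have "\<dots> = complex_of_real (gg N zl zr i) * a i j"
    using assms by (simp add: gg_def distrib_right)
  finally show ?thesis .
qed

lemma mmul_G2:
  assumes "i \<in> {1..N}" "j \<in> {1..N}" "N \<ge> 1"
  shows "mmul N a (\<lambda>i j. complex_of_real zl * proj 1 i j + complex_of_real zr * proj N i j) i j
     = complex_of_real (gg N zl zr j) * a i j"
proof -
  have "mmul N a (\<lambda>i j. complex_of_real zl * proj 1 i j + complex_of_real zr * proj N i j) i j
     = (\<Sum>k\<in>{1..N}. (if k = 1 then complex_of_real zl * (if j = 1 then a i 1 else 0) else 0))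
      + (\<Sum>k\<in>{1..N}. (if k = N then complex_of_real zr * (if j = N then a i N else 0) else 0))"
    unfolding mmul_def proj_def sum.distrib[symmetric]
    by (rule sum.cong) (auto simp: distrib_left)
  also have "\<dots> = complex_of_real (gg N zl zr j) * a i j"
    using assms by (simp add: gg_def distrib_right)
  finally show ?thesis .
qed

lemma dephase:
  assumes "i \<in> {1..N}" "j \<in> {1..N}"
  shows "(\<Sum>n\<in>{1..N}. mmul N (mmul N (proj n) a) (proj n) i j) = (if i = j then a i i else 0)"
proof -
  have A: "mmul N (proj n) a i k = (if i = n then a n k else 0)" if "n \<in> {1..N}" for n k
  proof -
    have "mmul N (proj n) a i k = (\<Sum>m\<in>{1..N}. if m = n then (if i = n then a n k else 0) else 0)"
      unfolding mmul_def proj_def by (rule sum.cong) auto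
    then show ?thesis using that by simp
  qed
  have B: "mmul N (mmul N (proj n) a) (proj n) i j = (if i = n \<and> j = n then a n n else 0)" if "n \<in> {1..N}" for n
  proof -
    have "mmul N (mmul N (proj n) a) (proj n) i j = (\<Sum>k\<in>{1..N}. if k = n then (if i = n \<and> j = n then a n n else 0) else 0)"
      unfolding mmul_def[of N "mmul N (proj n) a"] using A[OF that] by (intro sum.cong) (auto simp: proj_def)
    then show ?thesis using that by simp
  qed
  have "(\<Sum>n\<in>{1..N}. mmul N (mmul N (proj n) a) (proj n) i j)
      = (\<Sum>n\<in>{1..N}. if n = i then (if j = i then a i i else 0) else 0)"
    using B by (intro sum.cong) auto
  also have "\<dots> = (if i = j then a i i else 0)" using assms by auto
  finally show ?thesis .
qed

lemma lind_box:
  assumes "i \<in> {1..N}" "j \<in> {1..N}"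
  shows "lind N v zl zr \<beta> a i j = - \<i> * (mmul N (hmat N v) a i j - mmul N a (hmat N v) i j)
     - complex_of_real (gg N zl zr i + gg N zl zr j) * a i j
     + complex_of_real \<beta> * ((if i = j then a i i else 0) - a i j)"
proof -
  have N: "N \<ge> 1" using assms by auto
  show ?thesis unfolding lind_def Let_def
    using mmul_G[OF assms N] mmul_G2[OF assms N] dephase[OF assms]
    by (simp add: algebra_simps)
qed

lemma mmul_add1: "mmul N H (\<lambda>i j. a i j + b i j) i j = mmul N H a i j + mmul N H b i j"
  by (simp add: mmul_def distrib_left sum.distrib)
lemma mmul_add2: "mmul N (\<lambda>i j. a i j + b i j) H i j = mmul N a H i j + mmul N b H i j"
  by (simp add: mmul_def distrib_right sum.distrib)
lemma mmul_sc1: "mmul N H (\<lambda>i j. c * a i j) i j = c * mmul N H a i j"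
  by (simp add: mmul_def sum_distrib_left ac_simps)
lemma mmul_sc2: "mmul N (\<lambda>i j. c * a i j) H i j = c * mmul N a H i j"
  by (simp add: mmul_def sum_distrib_left ac_simps)

lemma lind_add:
  assumes "i \<in> {1..N}" "j \<in> {1..N}"
  shows "lind N v zl zr \<beta> (\<lambda>i j. a i j + b i j) i j = lind N v zl zr \<beta> a i j + lind N v zl zr \<beta> b i j"
  unfolding lind_box[OF assms] mmul_add1 mmul_add2 by (simp add: algebra_simps)

lemma lind_sc:
  assumes "i \<in> {1..N}" "j \<in> {1..N}"
  shows "lind N v zl zr \<beta> (\<lambda>i j. c * a i j) i j = c * lind N v zl zr \<beta> a i j"
  unfolding lind_box[OF assms] mmul_sc1 mmul_sc2 by (simp add: algebra_simps)

lemma lind_zero: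
  assumes "i \<in> {1..N}" "j \<in> {1..N}"
  shows "lind N v zl zr \<beta> (\<lambda>i j. 0) i j = 0"
  unfolding lind_box[OF assms] by (simp add: mmul_def)

lemma lind_sum:
  assumes "i \<in> {1..N}" "j \<in> {1..N}" "finite S"
  shows "lind N v zl zr \<beta> (\<lambda>i j. \<Sum>x\<in>S. f x i j) i j = (\<Sum>x\<in>S. lind N v zl zr \<beta> (f x) i j)"
  using assms(3)
proof (induction S rule: finite_induct)
  case empty
  then show ?case using lind_zero[OF assms(1,2)] by simp
next
  case (insert x F)
  have "lind N v zl zr \<beta> (\<lambda>i j. \<Sum>x\<in>insert x F. f x i j) i j
      = lind N v zl zr \<beta> (\<lambda>i j. f x i j + (\<Sum>x\<in>F. f x i j)) i j"
    using insert by simp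
  also have "\<dots> = lind N v zl zr \<beta> (f x) i j + lind N v zl zr \<beta> (\<lambda>i j. \<Sum>x\<in>F. f x i j) i j"
    by (rule lind_add[OF assms(1,2)])
  finally show ?case using insert by simp
qed

lemma lind_cong:
  assumes "i \<in> {1..N}" "j \<in> {1..N}" "\<And>i j. i \<in> {1..N} \<Longrightarrow> j \<in> {1..N} \<Longrightarrow> a i j = b i j"
  shows "lind N v zl zr \<beta> a i j = lind N v zl zr \<beta> b i j"
  unfolding lind_box[OF assms(1,2)] mmul_def using assms by simp

lemma double_delta:
  assumes "i \<in> A" "j \<in> B" "finite A" "finite B"
  shows "(\<Sum>k\<in>A. \<Sum>m\<in>B. if i = k \<and> j = m then f k m else 0) = (f i j :: 'a::comm_monoid_add)"
proof -
  have "(\<Sum>k\<in>A. \<Sum>m\<in>B. if i = k \<and> j = m then f k m else 0)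
     = (\<Sum>k\<in>A. if i = k then (\<Sum>m\<in>B. if j = m then f k m else 0) else 0)"
    by (intro sum.cong) auto
  also have "\<dots> = f i j" using assms by simp
  finally show ?thesis .
qed

lemma lind_decomp:
  assumes "i \<in> {1..N}" "j \<in> {1..N}"
  shows "lind N v zl zr \<beta> a i j = (\<Sum>k\<in>{1..N}. \<Sum>m\<in>{1..N}. a k m * lind N v zl zr \<beta> (Em k m) i j)"
proof -
  have "lind N v zl zr \<beta> a i j = lind N v zl zr \<beta> (\<lambda>i j. \<Sum>k\<in>{1..N}. \<Sum>m\<in>{1..N}. a k m * Em k m i j) i j"
  proof (rule lind_cong[OF assms])
    fix i j assume "i \<in> {1..N}" "j \<in> {1..N}"
    then show "a i j = (\<Sum>k\<in>{1..N}. \<Sum>m\<in>{1..N}. a k m * Em k m i j)"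
      using double_delta[of i "{1..N}" j "{1..N}" a] by (simp add: Em_def if_distrib cong: if_cong)
  qed
  also have "\<dots> = (\<Sum>k\<in>{1..N}. lind N v zl zr \<beta> (\<lambda>i j. \<Sum>m\<in>{1..N}. a k m * Em k m i j) i j)"
    by (rule lind_sum[OF assms]) simp
  also have "\<dots> = (\<Sum>k\<in>{1..N}. \<Sum>m\<in>{1..N}. lind N v zl zr \<beta> (\<lambda>i j. a k m * Em k m i j) i j)"
    by (intro sum.cong refl lind_sum[OF assms]) simp
  also have "\<dots> = (\<Sum>k\<in>{1..N}. \<Sum>m\<in>{1..N}. a k m * lind N v zl zr \<beta> (Em k m) i j)"
    by (intro sum.cong refl lind_sc[OF assms])
  finally show ?thesis .
qed

definition nrm :: "nat \<Rightarrow> cmat \<Rightarrow> real" where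
  "nrm N a = (\<Sum>i\<in>{1..N}. \<Sum>j\<in>{1..N}. (cmod (a i j))\<^sup>2)"
definition offn :: "nat \<Rightarrow> cmat \<Rightarrow> real" where
  "offn N a = (\<Sum>i\<in>{1..N}. \<Sum>j\<in>{1..N}. if i = j then 0 else (cmod (a i j))\<^sup>2)"
definition Dis :: "nat \<Rightarrow> real \<Rightarrow> real \<Rightarrow> real \<Rightarrow> cmat \<Rightarrow> real" where
  "Dis N zl zr \<beta> a = (\<Sum>i\<in>{1..N}. \<Sum>j\<in>{1..N}. (gg N zl zr i + gg N zl zr j) * (cmod (a i j))\<^sup>2)
     + \<beta> * offn N a"
definition inn :: "nat \<Rightarrow> cmat \<Rightarrow> cmat \<Rightarrow> complex" where
  "inn N a b = (\<Sum>i\<in>{1..N}. \<Sum>j\<in>{1..N}. cnj (a i j) * b i j)"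

lemma hmat_real: "cnj (hmat N v i k) = hmat N v i k"
  by (auto simp: hmat_def)
lemma hmat_sym: "hmat N v i k = hmat N v k i"
  by (auto simp: hmat_def)

lemma cnj_z_z: "cnj z * z = complex_of_real ((cmod z)\<^sup>2)"
  using complex_norm_square[of z] by (simp add: mult.commute)

lemma real_part1: "Im (\<Sum>i\<in>{1..N}. \<Sum>j\<in>{1..N}. cnj (a i j) * mmul N (hmat N v) a i j) = 0"
proof -
  define f where "f i j k = cnj (a i j) * hmat N v i k * a k j" for i j k
  let ?S = "\<Sum>i\<in>{1..N}. \<Sum>j\<in>{1..N}. \<Sum>k\<in>{1..N}. f i j k"
  have S: "(\<Sum>i\<in>{1..N}. \<Sum>j\<in>{1..N}. cnj (a i j) * mmul N (hmat N v) a i j) = ?S"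
    by (simp add: mmul_def sum_distrib_left f_def mult.assoc)
  have c: "cnj (f i j k) = f k j i" for i j k
    unfolding f_def by (simp add: hmat_real hmat_sym[of N v i k] ac_simps)
  have "cnj ?S = (\<Sum>i\<in>{1..N}. \<Sum>j\<in>{1..N}. \<Sum>k\<in>{1..N}. f k j i)"
    by (simp add: cnj_sum c)
  also have "\<dots> = (\<Sum>i\<in>{1..N}. \<Sum>k\<in>{1..N}. \<Sum>j\<in>{1..N}. f k j i)"
    by (intro sum.cong refl sum.swap)
  also have "\<dots> = (\<Sum>k\<in>{1..N}. \<Sum>i\<in>{1..N}. \<Sum>j\<in>{1..N}. f k j i)"
    by (rule sum.swap)
  also have "\<dots> = ?S"
    by (intro sum.cong refl sum.swap)
  finally have "cnj ?S = ?S" .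
  then have "Im ?S = 0" by (metis complex_cnj_cancel_iff complex.sel(2) cnj.sel(2) neg_equal_zero)
  then show ?thesis using S by simp
qed

lemma real_part2: "Im (\<Sum>i\<in>{1..N}. \<Sum>j\<in>{1..N}. cnj (a i j) * mmul N a (hmat N v) i j) = 0"
proof -
  define f where "f i j k = cnj (a i j) * a i k * hmat N v k j" for i j k
  let ?S = "\<Sum>i\<in>{1..N}. \<Sum>j\<in>{1..N}. \<Sum>k\<in>{1..N}. f i j k"
  have S: "(\<Sum>i\<in>{1..N}. \<Sum>j\<in>{1..N}. cnj (a i j) * mmul N a (hmat N v) i j) = ?S"
    by (simp add: mmul_def sum_distrib_left f_def mult.assoc)
  have c: "cnj (f i j k) = f i k j" for i j k
    unfolding f_def by (simp add: hmat_real hmat_sym[of N v k j] ac_simps)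
  have "cnj ?S = (\<Sum>i\<in>{1..N}. \<Sum>j\<in>{1..N}. \<Sum>k\<in>{1..N}. f i k j)"
    by (simp add: cnj_sum c)
  also have "\<dots> = ?S"
    by (intro sum.cong refl sum.swap)
  finally have "cnj ?S = ?S" .
  then have "Im ?S = 0" by (metis complex_cnj_cancel_iff complex.sel(2) cnj.sel(2) neg_equal_zero)
  then show ?thesis using S by simp
qed

lemma dissip:
  "Re (inn N a (lind N v zl zr \<beta> a)) = - Dis N zl zr \<beta> a"
proof -
  let ?M1 = "\<lambda>i j. mmul N (hmat N v) a i j" and ?M2 = "\<lambda>i j. mmul N a (hmat N v) i j"
  have e: "cnj (a i j) * lind N v zl zr \<beta> a i j =
      - \<i> * (cnj (a i j) * ?M1 i j) + \<i> * (cnj (a i j) * ?M2 i j)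
      - complex_of_real ((gg N zl zr i + gg N zl zr j) * (cmod (a i j))\<^sup>2)
      - complex_of_real (\<beta> * (if i = j then 0 else (cmod (a i j))\<^sup>2))"
    if "i \<in> {1..N}" "j \<in> {1..N}" for i j
  proof -
    have n: "(complex_of_real (cmod (a i j)))^2 = a i j * cnj (a i j)"
      using complex_norm_square[of "a i j"] by simp
    show ?thesis unfolding lind_box[OF that]
      by (auto simp: algebra_simps n)
  qed
  have "Re (inn N a (lind N v zl zr \<beta> a)) = (\<Sum>i\<in>{1..N}. \<Sum>j\<in>{1..N}.
      Im (cnj (a i j) * ?M1 i j) - Im (cnj (a i j) * ?M2 i j)
      - ((gg N zl zr i + gg N zl zr j) * (cmod (a i j))\<^sup>2)
      - (\<beta> * (if i = j then 0 else (cmod (a i j))\<^sup>2)))"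
    unfolding inn_def Re_sum by (intro sum.cong refl) (simp add: e)
  also have "\<dots> = Im (\<Sum>i\<in>{1..N}. \<Sum>j\<in>{1..N}. cnj (a i j) * ?M1 i j)
      - Im (\<Sum>i\<in>{1..N}. \<Sum>j\<in>{1..N}. cnj (a i j) * ?M2 i j) - Dis N zl zr \<beta> a"
    by (simp add: Im_sum sum_subtractf Dis_def offn_def sum_distrib_left)
  also have "\<dots> = - Dis N zl zr \<beta> a" using real_part1 real_part2 by simp
  finally show ?thesis .
qed

lemma entry_le: "i \<in> {1..N} \<Longrightarrow> j \<in> {1..N} \<Longrightarrow> (cmod (a i j))\<^sup>2 \<le> nrm N a"
  unfolding nrm_def
  by (rule order_trans[OF member_le_sum[of j "{1..N}" "\<lambda>j. (cmod (a i j))\<^sup>2"]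
        member_le_sum[of i "{1..N}" "\<lambda>i. \<Sum>j\<in>{1..N}. (cmod (a i j))\<^sup>2"]])
     (auto intro: sum_nonneg)

lemma entry_le': "i \<in> {1..N} \<Longrightarrow> j \<in> {1..N} \<Longrightarrow> cmod (a i j) \<le> sqrt (nrm N a)"
  using entry_le real_le_rsqrt by blast

lemma offentry_le: "i \<in> {1..N} \<Longrightarrow> j \<in> {1..N} \<Longrightarrow> i \<noteq> j \<Longrightarrow> (cmod (a i j))\<^sup>2 \<le> offn N a"
  unfolding offn_def
  by (rule order_trans[OF _ member_le_sum[of i "{1..N}" "\<lambda>i. \<Sum>j\<in>{1..N}. if i = j then 0 else (cmod (a i j))\<^sup>2"]],
      rule order_trans[OF _ member_le_sum[of j "{1..N}" "\<lambda>j. if i = j then 0 else (cmod (a i j))\<^sup>2"]])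
     (auto intro: sum_nonneg)

lemma offentry_le': "i \<in> {1..N} \<Longrightarrow> j \<in> {1..N} \<Longrightarrow> i \<noteq> j \<Longrightarrow> cmod (a i j) \<le> sqrt (offn N a)"
  using offentry_le real_le_rsqrt by blast

lemma nrm_nonneg: "nrm N a \<ge> 0" unfolding nrm_def by (intro sum_nonneg) auto
lemma offn_nonneg: "offn N a \<ge> 0" unfolding offn_def by (intro sum_nonneg) auto

definition KL :: "nat \<Rightarrow> (nat \<Rightarrow> real) \<Rightarrow> real \<Rightarrow> real \<Rightarrow> real \<Rightarrow> real" where
  "KL N v zl zr \<beta> = (\<Sum>i\<in>{1..N}. \<Sum>j\<in>{1..N}.
     (\<Sum>k\<in>{1..N}. \<Sum>m\<in>{1..N}. cmod (lind N v zl zr \<beta> (Em k m) i j))\<^sup>2)"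

lemma KL_nonneg: "KL N v zl zr \<beta> \<ge> 0" unfolding KL_def by (intro sum_nonneg) auto

lemma lind_bound:
  "nrm N (lind N v zl zr \<beta> a) \<le> KL N v zl zr \<beta> * nrm N a"
proof -
  let ?W = "\<lambda>i j. \<Sum>k\<in>{1..N}. \<Sum>m\<in>{1..N}. cmod (lind N v zl zr \<beta> (Em k m) i j)"
  have "(cmod (lind N v zl zr \<beta> a i j))\<^sup>2 \<le> (?W i j)\<^sup>2 * nrm N a"
    if ij: "i \<in> {1..N}" "j \<in> {1..N}" for i j
  proof -
    have "cmod (lind N v zl zr \<beta> a i j) \<le> (\<Sum>k\<in>{1..N}. \<Sum>m\<in>{1..N}. cmod (a k m * lind N v zl zr \<beta> (Em k m) i j))"
      unfolding lind_decomp[OF ij, of v zl zr \<beta> a]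
      by (rule order_trans[OF norm_sum sum_mono[OF norm_sum]])
    also have "\<dots> \<le> (\<Sum>k\<in>{1..N}. \<Sum>m\<in>{1..N}. sqrt (nrm N a) * cmod (lind N v zl zr \<beta> (Em k m) i j))"
      unfolding norm_mult by (intro sum_mono mult_right_mono entry_le') auto
    also have "\<dots> = sqrt (nrm N a) * ?W i j" by (simp add: sum_distrib_left)
    finally have le: "cmod (lind N v zl zr \<beta> a i j) \<le> sqrt (nrm N a) * ?W i j" .
    have "(cmod (lind N v zl zr \<beta> a i j))\<^sup>2 \<le> (sqrt (nrm N a) * ?W i j)\<^sup>2"
      by (rule power_mono[OF le]) simp
    also have "\<dots> = (?W i j)\<^sup>2 * nrm N a" using nrm_nonneg[of N a]
      by (simp add: power_mult_distrib)
    finally show ?thesis .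
  qed
  then have "nrm N (lind N v zl zr \<beta> a) \<le> (\<Sum>i\<in>{1..N}. \<Sum>j\<in>{1..N}. (?W i j)\<^sup>2 * nrm N a)"
    unfolding nrm_def[of N "lind N v zl zr \<beta> a"] by (intro sum_mono) auto
  also have "\<dots> = KL N v zl zr \<beta> * nrm N a" by (simp add: KL_def sum_distrib_right)
  finally show ?thesis .
qed

definition hm :: "nat \<Rightarrow> (nat \<Rightarrow> real) \<Rightarrow> real" where
  "hm N v = 1 + (\<Sum>n\<in>{1..N}. \<bar>v n\<bar>)"

lemma hm_ge1: "hm N v \<ge> 1" unfolding hm_def by (simp add: sum_nonneg)

lemma hmat_le: "cmod (hmat N v i k) \<le> hm N v"
proof -
  have s: "\<bar>v i\<bar> \<le> (\<Sum>n\<in>{1..N}. \<bar>v n\<bar>)" if "i \<in> {1..N}"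
    using member_le_sum[of i "{1..N}" "\<lambda>n. \<bar>v n\<bar>"] that by auto
  have "0 \<le> (\<Sum>n\<in>{1..N}. \<bar>v n\<bar>)" by (simp add: sum_nonneg)
  then show ?thesis using s unfolding hm_def hmat_def by auto
qed

lemma gg_nonneg: "zl \<ge> 0 \<Longrightarrow> zr \<ge> 0 \<Longrightarrow> gg N zl zr i \<ge> 0" by (simp add: gg_def)
lemma gg_le: "zl \<ge> 0 \<Longrightarrow> zr \<ge> 0 \<Longrightarrow> gg N zl zr i \<le> zl + zr" by (simp add: gg_def)

lemma Dis_ge_off:
  assumes "zl \<ge> 0" "zr \<ge> 0"
  shows "Dis N zl zr \<beta> a \<ge> \<beta> * offn N a"
proof -
  have "0 \<le> (\<Sum>i\<in>{1..N}. \<Sum>j\<in>{1..N}. (gg N zl zr i + gg N zl zr j) * (cmod (a i j))\<^sup>2)"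
    using gg_nonneg[OF assms] by (intro sum_nonneg mult_nonneg_nonneg add_nonneg_nonneg) auto
  then show ?thesis unfolding Dis_def by simp
qed

lemma Dis_ge_11:
  assumes "zl \<ge> 0" "zr \<ge> 0" "\<beta> \<ge> 0" "N \<ge> 2"
  shows "Dis N zl zr \<beta> a \<ge> 2 * zl * (cmod (a 1 1))\<^sup>2"
proof -
  let ?f = "\<lambda>i j. (gg N zl zr i + gg N zl zr j) * (cmod (a i j))\<^sup>2"
  have nn: "0 \<le> ?f i j" for i j
    using gg_nonneg[OF assms(1,2)] by (intro mult_nonneg_nonneg add_nonneg_nonneg) auto
  have "?f 1 1 \<le> (\<Sum>j\<in>{1..N}. ?f 1 j)"
    using assms by (intro member_le_sum nn) auto
  also have "\<dots> \<le> (\<Sum>i\<in>{1..N}. \<Sum>j\<in>{1..N}. ?f i j)"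
    using assms by (intro member_le_sum[of 1 "{1..N}" "\<lambda>i. \<Sum>j\<in>{1..N}. ?f i j"] sum_nonneg nn) auto
  finally have "?f 1 1 \<le> (\<Sum>i\<in>{1..N}. \<Sum>j\<in>{1..N}. ?f i j)" .
  moreover have "gg N zl zr 1 = zl" using assms by (simp add: gg_def)
  moreover have "0 \<le> \<beta> * offn N a" using assms offn_nonneg by simp
  ultimately show ?thesis unfolding Dis_def by (simp del: One_nat_def)
qed

definition QQ :: "nat \<Rightarrow> (nat \<Rightarrow> real) \<Rightarrow> real \<Rightarrow> real \<Rightarrow> real \<Rightarrow> real" where
  "QQ N v zl zr \<beta> = 2 * real N * hm N v + 2 * (zl + zr) + \<beta>"

lemma sum_off_bound:
  assumes "j \<in> {1..N}"
  shows "cmod (\<Sum>k\<in>{1..N}. if k = j then 0 else hmat N v i k * a k j) \<le> real N * hm N v * sqrt (offn N a)"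
proof -
  have "cmod (\<Sum>k\<in>{1..N}. if k = j then 0 else hmat N v i k * a k j)
      \<le> (\<Sum>k\<in>{1..N}. cmod (if k = j then 0 else hmat N v i k * a k j))" by (rule norm_sum)
  also have "\<dots> \<le> (\<Sum>k\<in>{1..N}. hm N v * sqrt (offn N a))"
  proof (intro sum_mono)
    fix k assume k: "k \<in> {1..N}"
    show "cmod (if k = j then 0 else hmat N v i k * a k j) \<le> hm N v * sqrt (offn N a)"
    proof (cases "k = j")
      case False
      then show ?thesis using hmat_le[of N v i k] offentry_le'[OF k assms False, of a] hm_ge1[of N v]
        by (simp add: mult_mono norm_mult)
    qed (insert hm_ge1[of N v] offn_nonneg[of N a], auto)
  qed
  also have "\<dots> = real N * hm N v * sqrt (offn N a)" by simp
  finally show ?thesis .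
qed

lemma sum_off_bound2:
  assumes "i \<in> {1..N}"
  shows "cmod (\<Sum>k\<in>{1..N}. if k = i then 0 else a i k * hmat N v k j) \<le> real N * hm N v * sqrt (offn N a)"
proof -
  have "cmod (\<Sum>k\<in>{1..N}. if k = i then 0 else a i k * hmat N v k j)
      \<le> (\<Sum>k\<in>{1..N}. cmod (if k = i then 0 else a i k * hmat N v k j))" by (rule norm_sum)
  also have "\<dots> \<le> (\<Sum>k\<in>{1..N}. hm N v * sqrt (offn N a))"
  proof (intro sum_mono)
    fix k assume k: "k \<in> {1..N}"
    show "cmod (if k = i then 0 else a i k * hmat N v k j) \<le> hm N v * sqrt (offn N a)"
    proof (cases "k = i")
      case False
      then have "i \<noteq> k" by simp
      then show ?thesis
      proof -
        have "cmod (a i k) * cmod (hmat N v k j) \<le> sqrt (offn N a) * hm N v"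
          by (rule mult_mono) (use hmat_le[of N v k j] offentry_le'[OF assms k \<open>i \<noteq> k\<close>, of a] offn_nonneg[of N a] in auto)
        then show ?thesis using \<open>k \<noteq> i\<close> by (simp add: norm_mult mult.commute)
      qed
    qed (insert hm_ge1[of N v] offn_nonneg[of N a], auto)
  qed
  also have "\<dots> = real N * hm N v * sqrt (offn N a)" by simp
  finally show ?thesis .
qed

lemma split_sum_at:
  fixes N :: nat
  assumes "j \<in> {1..N}"
  shows "(\<Sum>k\<in>{1..N}. f k) = f j + (\<Sum>k\<in>{1..N}. if k = j then 0 else f k :: complex)"
proof -
  have "(\<Sum>k\<in>{1..N}. f k) = (\<Sum>k\<in>{1..N}. (if k = j then f k else 0) + (if k = j then 0 else f k))"
    by (intro sum.cong) auto
  also have "\<dots> = (\<Sum>k\<in>{1..N}. if k = j then f k else 0) + (\<Sum>k\<in>{1..N}. if k = j then 0 else f k)"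
    by (rule sum.distrib)
  also have "(\<Sum>k\<in>{1..N}. if k = j then f k else 0) = f j"
    using assms by (subst sum.delta) auto
  finally show ?thesis .
qed

lemma delta_bound:
  assumes "1 \<le> n" "n + 1 \<le> N" "zl \<ge> 0" "zr \<ge> 0" "\<beta> \<ge> 0"
  shows "cmod (a (n+1) (n+1) - a n n) \<le> sqrt (offn N (lind N v zl zr \<beta> a)) + QQ N v zl zr \<beta> * sqrt (offn N a)"
proof -
  define i where "i = n + 1"
  have i: "i \<in> {1..N}" and j: "n \<in> {1..N}" and ij: "i \<noteq> n" using assms by (auto simp: i_def)
  define P where "P = (\<Sum>k\<in>{1..N}. if k = n then 0 else hmat N v i k * a k n)"
  define Q where "Q = (\<Sum>k\<in>{1..N}. if k = i then 0 else a i k * hmat N v k n)"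
  have H1: "hmat N v i n = -1" using i j by (simp add: hmat_def i_def)
  have M1: "mmul N (hmat N v) a i n = - a n n + P"
    unfolding mmul_def P_def using split_sum_at[OF j, of "\<lambda>k. hmat N v i k * a k n"] H1 by simp
  have M2: "mmul N a (hmat N v) i n = - a i i + Q"
    unfolding mmul_def Q_def using split_sum_at[OF i, of "\<lambda>k. a i k * hmat N v k n"] H1 by simp
  define c where "c = gg N zl zr i + gg N zl zr n + \<beta>"
  have L: "lind N v zl zr \<beta> a i n = - \<i> * (a i i - a n n + P - Q) - complex_of_real c * a i n"
    unfolding lind_box[OF i j] M1 M2 c_def using ij by (simp add: algebra_simps)
  have "a i i - a n n = \<i> * (lind N v zl zr \<beta> a i n + complex_of_real c * a i n) - P + Q"
    unfolding L by (simp add: algebra_simps)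
  then have "cmod (a i i - a n n) \<le> cmod (\<i> * (lind N v zl zr \<beta> a i n + complex_of_real c * a i n)) + cmod P + cmod Q"
  proof -
    let ?X = "\<i> * (lind N v zl zr \<beta> a i n + complex_of_real c * a i n)"
    have "cmod (?X - P + Q) \<le> cmod (?X - P) + cmod Q" by (rule norm_triangle_ineq)
    moreover have "cmod (?X - P) \<le> cmod ?X + cmod P" by (rule norm_triangle_ineq4)
    ultimately show ?thesis using \<open>a i i - a n n = ?X - P + Q\<close> by simp
  qed
  also have "cmod (\<i> * (lind N v zl zr \<beta> a i n + complex_of_real c * a i n)) \<le> cmod (lind N v zl zr \<beta> a i n) + c * cmod (a i n)"
  proof -
    have "c \<ge> 0" using gg_nonneg[OF assms(3,4)] assms by (simp add: c_def)
    then show ?thesis unfolding norm_mult norm_ii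
      using norm_triangle_ineq[of "lind N v zl zr \<beta> a i n" "complex_of_real c * a i n"] by (simp add: norm_mult)
  qed
  finally have "cmod (a i i - a n n) \<le> cmod (lind N v zl zr \<beta> a i n) + c * cmod (a i n) + cmod P + cmod Q"
    by simp
  also have "\<dots> \<le> sqrt (offn N (lind N v zl zr \<beta> a)) + (2 * (zl + zr) + \<beta>) * sqrt (offn N a)
       + real N * hm N v * sqrt (offn N a) + real N * hm N v * sqrt (offn N a)"
  proof -
    have "c \<le> 2 * (zl + zr) + \<beta>" using gg_le[OF assms(3,4), of N i] gg_le[OF assms(3,4), of N n] by (simp add: c_def)
    moreover have "c \<ge> 0" using gg_nonneg[OF assms(3,4)] assms by (simp add: c_def)
    ultimately have "c * cmod (a i n) \<le> (2 * (zl + zr) + \<beta>) * sqrt (offn N a)"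
      using offentry_le'[OF i j ij, of a] by (simp add: mult_mono)
    then show ?thesis
      using offentry_le'[OF i j ij, of "lind N v zl zr \<beta> a"] sum_off_bound[OF j, of v i a]
        sum_off_bound2[OF i, of a v n] unfolding P_def Q_def by linarith
  qed
  also have "\<dots> = sqrt (offn N (lind N v zl zr \<beta> a)) + QQ N v zl zr \<beta> * sqrt (offn N a)"
    by (simp add: QQ_def algebra_simps)
  finally show ?thesis by (simp add: i_def)
qed

lemma diag_bound:
  assumes "zl \<ge> 0" "zr \<ge> 0" "\<beta> \<ge> 0" "m + 1 \<le> N"
  shows "cmod (a (m+1) (m+1)) \<le> cmod (a 1 1) + real m * (sqrt (offn N (lind N v zl zr \<beta> a)) + QQ N v zl zr \<beta> * sqrt (offn N a))"
  using assms(4)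
proof (induction m)
  case 0
  then show ?case by simp
next
  case (Suc m)
  let ?S = "sqrt (offn N (lind N v zl zr \<beta> a)) + QQ N v zl zr \<beta> * sqrt (offn N a)"
  have d: "cmod (a (m+2) (m+2) - a (m+1) (m+1)) \<le> ?S"
    using delta_bound[of "m+1" N zl zr \<beta> a v] assms Suc.prems by (simp add: add.commute)
  have "cmod (a (m+2) (m+2)) \<le> cmod (a (m+1) (m+1)) + cmod (a (m+2) (m+2) - a (m+1) (m+1))"
    by (metis norm_triangle_ineq add.commute diff_add_cancel)
  then show ?case using Suc d by (simp add: algebra_simps)
qed

lemma nrm_split: "nrm N a = offn N a + (\<Sum>n\<in>{1..N}. (cmod (a n n))\<^sup>2)"
proof -
  have "(\<Sum>j\<in>{1..N}. (cmod (a i j))\<^sup>2) = (\<Sum>j\<in>{1..N}. if i = j then 0 else (cmod (a i j))\<^sup>2) + (\<Sum>j\<in>{1..N}. if i = j then (cmod (a i j))\<^sup>2 else 0)" for i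
    by (subst sum.distrib[symmetric]) (intro sum.cong, auto)
  then have "nrm N a = offn N a + (\<Sum>i\<in>{1..N}. \<Sum>j\<in>{1..N}. if i = j then (cmod (a i j))\<^sup>2 else 0)"
    unfolding nrm_def offn_def by (simp add: sum.distrib)
  also have "(\<Sum>i\<in>{1..N}. \<Sum>j\<in>{1..N}. if i = j then (cmod (a i j))\<^sup>2 else 0) = (\<Sum>n\<in>{1..N}. (cmod (a n n))\<^sup>2)"
    by (intro sum.cong refl) (subst sum.delta', auto)
  finally show ?thesis .
qed

definition CC :: "nat \<Rightarrow> (nat \<Rightarrow> real) \<Rightarrow> real \<Rightarrow> real \<Rightarrow> real \<Rightarrow> real" where
  "CC N v zl zr \<beta> = (1 + 4 * real N ^ 3 * (QQ N v zl zr \<beta>)\<^sup>2 + 4 * real N ^ 3) / \<beta> + real N / zl"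

lemma QQ_nonneg: "zl \<ge> 0 \<Longrightarrow> zr \<ge> 0 \<Longrightarrow> \<beta> \<ge> 0 \<Longrightarrow> QQ N v zl zr \<beta> \<ge> 0"
  unfolding QQ_def using hm_ge1[of N v] by simp

lemma CC_pos: "zl > 0 \<Longrightarrow> \<beta> > 0 \<Longrightarrow> N \<ge> 1 \<Longrightarrow> CC N v zl zr \<beta> > 0"
proof -
  assume a: "zl > 0" "\<beta> > 0" "N \<ge> 1"
  have "0 < 1 + 4 * real N ^ 3 * (QQ N v zl zr \<beta>)\<^sup>2 + 4 * real N ^ 3" by (simp add: add_pos_nonneg)
  then have "0 < (1 + 4 * real N ^ 3 * (QQ N v zl zr \<beta>)\<^sup>2 + 4 * real N ^ 3) / \<beta>" using a by simp
  moreover have "0 < real N / zl" using a by simp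
  ultimately show ?thesis unfolding CC_def by linarith
qed

lemma Dis_nonneg: "zl \<ge> 0 \<Longrightarrow> zr \<ge> 0 \<Longrightarrow> \<beta> \<ge> 0 \<Longrightarrow> Dis N zl zr \<beta> a \<ge> 0"
  using Dis_ge_off[of zl zr \<beta> N a] offn_nonneg[of N a] by (smt (verit) mult_nonneg_nonneg)

lemma coerc:
  assumes "N \<ge> 2" "zl > 0" "zr \<ge> 0" "\<beta> > 0"
  shows "nrm N a \<le> CC N v zl zr \<beta> * (Dis N zl zr \<beta> a + Dis N zl zr \<beta> (lind N v zl zr \<beta> a))"
proof -
  let ?la = "lind N v zl zr \<beta> a"
  let ?Q = "QQ N v zl zr \<beta>"
  define S where "S = sqrt (offn N ?la) + ?Q * sqrt (offn N a)"
  define x where "x = cmod (a 1 1)"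
  have Q0: "?Q \<ge> 0" using QQ_nonneg assms by simp
  have S0: "S \<ge> 0" unfolding S_def using Q0 offn_nonneg by simp
  have S2: "S\<^sup>2 \<le> 2 * offn N ?la + 2 * ?Q\<^sup>2 * offn N a"
  proof -
    have "S\<^sup>2 \<le> 2 * (sqrt (offn N ?la))\<^sup>2 + 2 * (?Q * sqrt (offn N a))\<^sup>2"
      unfolding S_def by (smt (verit) power2_sum sum_squares_ge_zero power2_diff zero_le_power2)
    then show ?thesis using offn_nonneg[of N a] offn_nonneg[of N ?la] by (simp add: power_mult_distrib)
  qed
  have dn: "(cmod (a n n))\<^sup>2 \<le> 2 * x\<^sup>2 + 2 * real N ^ 2 * S\<^sup>2" if n: "n \<in> {1..N}" for n
  proof -
    obtain m where m: "n = m + 1" "m + 1 \<le> N" using n by (metis add.commute add_diff_inverse_nat atLeastAtMost_iff less_one not_less one_le_numeral order_trans plus_1_eq_Suc) 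
    have "cmod (a n n) \<le> x + real m * S"
      using diag_bound[of zl zr \<beta> m N a v] assms m unfolding x_def S_def by simp
    also have "\<dots> \<le> x + real N * S" using m S0 by (intro add_left_mono mult_right_mono) auto
    finally have le: "cmod (a n n) \<le> x + real N * S" .
    have "(cmod (a n n))\<^sup>2 \<le> (x + real N * S)\<^sup>2" by (rule power_mono[OF le]) simp
    also have "\<dots> \<le> 2 * x\<^sup>2 + 2 * (real N * S)\<^sup>2"
      by (smt (verit) power2_sum sum_squares_ge_zero power2_diff zero_le_power2)
    finally show ?thesis by (simp add: power_mult_distrib)
  qed
  have "(\<Sum>n\<in>{1..N}. (cmod (a n n))\<^sup>2) \<le> (\<Sum>n\<in>{1..N}. 2 * x\<^sup>2 + 2 * real N ^ 2 * S\<^sup>2)"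
    by (rule sum_mono) (rule dn)
  also have "\<dots> = real N * (2 * x\<^sup>2 + 2 * real N ^ 2 * S\<^sup>2)" by simp
  also have "\<dots> \<le> real N * (2 * x\<^sup>2 + 2 * real N ^ 2 * (2 * offn N ?la + 2 * ?Q\<^sup>2 * offn N a))"
    using S2 by (intro mult_left_mono add_left_mono) auto
  finally have diag: "(\<Sum>n\<in>{1..N}. (cmod (a n n))\<^sup>2) \<le> 2 * real N * x\<^sup>2 + 4 * real N ^ 3 * offn N ?la
      + 4 * real N ^ 3 * ?Q\<^sup>2 * offn N a" by (simp add: algebra_simps power3_eq_cube power2_eq_square)
  have o1: "offn N a \<le> Dis N zl zr \<beta> a / \<beta>"
    using Dis_ge_off[of zl zr \<beta> N a] assms by (simp add: field_simps)
  have o2: "offn N ?la \<le> Dis N zl zr \<beta> ?la / \<beta>"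
    using Dis_ge_off[of zl zr \<beta> N ?la] assms by (simp add: field_simps)
  have x2: "x\<^sup>2 \<le> Dis N zl zr \<beta> a / (2 * zl)"
    using Dis_ge_11[of zl zr \<beta> N a] assms unfolding x_def by (simp add: field_simps)
  have D1: "Dis N zl zr \<beta> a \<ge> 0" "Dis N zl zr \<beta> ?la \<ge> 0" using Dis_nonneg assms by auto
  have "nrm N a \<le> offn N a + 2 * real N * x\<^sup>2 + 4 * real N ^ 3 * offn N ?la + 4 * real N ^ 3 * ?Q\<^sup>2 * offn N a"
    using nrm_split[of N a] diag by simp
  also have "\<dots> \<le> Dis N zl zr \<beta> a / \<beta> + 2 * real N * (Dis N zl zr \<beta> a / (2 * zl))
      + 4 * real N ^ 3 * (Dis N zl zr \<beta> ?la / \<beta>) + 4 * real N ^ 3 * ?Q\<^sup>2 * (Dis N zl zr \<beta> a / \<beta>)"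
    using o1 o2 x2 by (intro add_mono mult_left_mono) auto
  also have "\<dots> = ((1 + 4 * real N ^ 3 * ?Q\<^sup>2) / \<beta> + real N / zl) * Dis N zl zr \<beta> a
      + (4 * real N ^ 3 / \<beta>) * Dis N zl zr \<beta> ?la"
    using assms by (simp add: field_simps)
  also have "\<dots> \<le> CC N v zl zr \<beta> * Dis N zl zr \<beta> a + CC N v zl zr \<beta> * Dis N zl zr \<beta> ?la"
  proof (intro add_mono mult_right_mono D1)
    show "(1 + 4 * real N ^ 3 * ?Q\<^sup>2) / \<beta> + real N / zl \<le> CC N v zl zr \<beta>"
      unfolding CC_def using assms by (simp add: add_divide_distrib)
    show "4 * real N ^ 3 / \<beta> \<le> CC N v zl zr \<beta>"
      unfolding CC_def using assms by (simp add: add_divide_distrib)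
  qed
  finally show ?thesis by (simp add: distrib_left)
qed

lemma lind_suminf:
  assumes ij: "i \<in> {1..N}" "j \<in> {1..N}"
    and sm: "\<And>k m. k \<in> {1..N} \<Longrightarrow> m \<in> {1..N} \<Longrightarrow> summable (\<lambda>n. f n k m)"
  shows "lind N v zl zr \<beta> (\<lambda>k m. \<Sum>n. f n k m) i j = (\<Sum>n. lind N v zl zr \<beta> (f n) i j)"
proof -
  let ?w = "\<lambda>k m. lind N v zl zr \<beta> (Em k m) i j"
  have "lind N v zl zr \<beta> (\<lambda>k m. \<Sum>n. f n k m) i j = (\<Sum>k\<in>{1..N}. \<Sum>m\<in>{1..N}. (\<Sum>n. f n k m) * ?w k m)"
    by (rule lind_decomp[OF ij])
  also have "\<dots> = (\<Sum>k\<in>{1..N}. \<Sum>m\<in>{1..N}. \<Sum>n. f n k m * ?w k m)"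
    by (intro sum.cong refl suminf_mult2 sm) auto
  also have "\<dots> = (\<Sum>k\<in>{1..N}. \<Sum>n. \<Sum>m\<in>{1..N}. f n k m * ?w k m)"
    by (intro sum.cong refl suminf_sum[symmetric] summable_mult2 sm) auto
  also have "\<dots> = (\<Sum>n. \<Sum>k\<in>{1..N}. \<Sum>m\<in>{1..N}. f n k m * ?w k m)"
    by (intro suminf_sum[symmetric] summable_sum summable_mult2 sm) auto
  also have "\<dots> = (\<Sum>n. lind N v zl zr \<beta> (f n) i j)"
    by (intro suminf_cong lind_decomp[OF ij, symmetric])
  finally show ?thesis .
qed

lemma pow_bound: "nrm N ((lind N v zl zr \<beta> ^^ k) b) \<le> KL N v zl zr \<beta> ^ k * nrm N b"
proof (induction k)
  case 0 then show ?case by simp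
next
  case (Suc k)
  have "nrm N ((lind N v zl zr \<beta> ^^ Suc k) b) \<le> KL N v zl zr \<beta> * nrm N ((lind N v zl zr \<beta> ^^ k) b)"
    using lind_bound by simp
  also have "\<dots> \<le> KL N v zl zr \<beta> * (KL N v zl zr \<beta> ^ k * nrm N b)"
    by (rule mult_left_mono[OF Suc KL_nonneg])
  finally show ?case by simp
qed

lemma pow_entry: assumes "i \<in> {1..N}" "j \<in> {1..N}"
  shows "cmod ((lind N v zl zr \<beta> ^^ k) b i j) \<le> sqrt (nrm N b) * sqrt (KL N v zl zr \<beta>) ^ k"
proof -
  have "cmod ((lind N v zl zr \<beta> ^^ k) b i j) \<le> sqrt (nrm N ((lind N v zl zr \<beta> ^^ k) b))"
    by (rule entry_le'[OF assms])
  also have "\<dots> \<le> sqrt (KL N v zl zr \<beta> ^ k * nrm N b)" by (rule real_sqrt_le_mono[OF pow_bound])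
  also have "\<dots> = sqrt (nrm N b) * sqrt (KL N v zl zr \<beta>) ^ k" by (simp add: real_sqrt_mult real_sqrt_power)
  finally show ?thesis .
qed

definition cf :: "nat \<Rightarrow> (nat \<Rightarrow> real) \<Rightarrow> real \<Rightarrow> real \<Rightarrow> real \<Rightarrow> cmat \<Rightarrow> nat \<Rightarrow> nat \<Rightarrow> nat \<Rightarrow> complex" where
  "cf N v zl zr \<beta> b i j k = (lind N v zl zr \<beta> ^^ k) b i j / of_real (fact k)"

lemma cf_summable: assumes "i \<in> {1..N}" "j \<in> {1..N}"
  shows "summable (\<lambda>k. cf N v zl zr \<beta> b i j k * z ^ k)"
proof (rule summable_comparison_test')
  let ?r = "sqrt (KL N v zl zr \<beta>) * cmod z"
  show "summable (\<lambda>k. sqrt (nrm N b) * (inverse (fact k) * ?r ^ k))"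
    by (intro summable_mult summable_exp)
  fix k :: nat
  have "cmod (cf N v zl zr \<beta> b i j k * z ^ k) = cmod ((lind N v zl zr \<beta> ^^ k) b i j) * cmod z ^ k / fact k"
    by (simp add: cf_def norm_mult norm_divide norm_power)
  also have "\<dots> \<le> sqrt (nrm N b) * sqrt (KL N v zl zr \<beta>) ^ k * cmod z ^ k / fact k"
    by (intro divide_right_mono mult_right_mono pow_entry assms) auto
  also have "\<dots> = sqrt (nrm N b) * (inverse (fact k) * ?r ^ k)"
    by (simp add: field_simps power_mult_distrib)
  finally show "norm (cf N v zl zr \<beta> b i j k * z ^ k) \<le> sqrt (nrm N b) * (inverse (fact k) * ?r ^ k)" .
qed

lemma expL_eq: "expL N v zl zr \<beta> s b i j = (\<Sum>k. cf N v zl zr \<beta> b i j k * (of_real s) ^ k)"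
  unfolding expL_def cf_def by (intro suminf_cong) (simp add: field_simps)

lemma expL_summable: assumes "i \<in> {1..N}" "j \<in> {1..N}"
  shows "summable (\<lambda>k. complex_of_real (s ^ k / fact k) * (lind N v zl zr \<beta> ^^ k) b i j)"
  using cf_summable[OF assms, of v zl zr \<beta> b "of_real s"]
  by (simp add: cf_def field_simps)

lemma expL_deriv:
  assumes ij: "i \<in> {1..N}" "j \<in> {1..N}"
  shows "((\<lambda>s. expL N v zl zr \<beta> s b i j) has_vector_derivative
            lind N v zl zr \<beta> (expL N v zl zr \<beta> s b) i j) (at s within X)"
proof -
  let ?L = "lind N v zl zr \<beta>"
  let ?c = "cf N v zl zr \<beta> b i j"
  have D: "((\<lambda>z. \<Sum>n. ?c n * z^n) has_field_derivative (\<Sum>n. diffs ?c n * (of_real s)^n)) (at (of_real s))"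
    by (rule termdiffs_strong_converges_everywhere) (rule cf_summable[OF ij])
  have "(\<Sum>n. diffs ?c n * (of_real s)^n) = (\<Sum>n. complex_of_real (s ^ n / fact n) * (?L ^^ Suc n) b i j)"
  proof (intro suminf_cong)
    fix n
    have f: "(fact (Suc n) :: complex) = of_nat (Suc n) * fact n" by (rule fact_Suc)
    have nz: "(fact n :: complex) \<noteq> 0" "(of_nat (Suc n) :: complex) \<noteq> 0" by (auto simp del: of_nat_Suc)
    show "diffs ?c n * (of_real s)^n = complex_of_real (s ^ n / fact n) * (?L ^^ Suc n) b i j"
      unfolding diffs_def cf_def using nz by (simp add: f field_simps del: of_nat_Suc)
  qed
  also have "\<dots> = (\<Sum>n. ?L ((\<lambda>k m. complex_of_real (s ^ n / fact n) * (?L ^^ n) b k m)) i j)"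
    by (intro suminf_cong, subst lind_sc[OF ij]) simp
  also have "\<dots> = ?L (\<lambda>k m. \<Sum>n. complex_of_real (s ^ n / fact n) * (?L ^^ n) b k m) i j"
    by (rule lind_suminf[OF ij, symmetric]) (rule expL_summable)
  also have "\<dots> = ?L (expL N v zl zr \<beta> s b) i j"
    unfolding expL_def by simp
  finally have e: "(\<Sum>n. diffs ?c n * (of_real s)^n) = ?L (expL N v zl zr \<beta> s b) i j" .
  show ?thesis
    unfolding expL_eq e[symmetric] by (rule has_vector_derivative_real_field[OF D])
qed

lemma lind_deriv:
  assumes ij: "i \<in> {1..N}" "j \<in> {1..N}"
    and d: "\<And>k m. k \<in> {1..N} \<Longrightarrow> m \<in> {1..N} \<Longrightarrow> ((\<lambda>s. f s k m) has_vector_derivative f' k m) F"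
  shows "((\<lambda>s. lind N v zl zr \<beta> (f s) i j) has_vector_derivative lind N v zl zr \<beta> f' i j) F"
proof -
  let ?w = "\<lambda>k m. lind N v zl zr \<beta> (Em k m) i j"
  have "((\<lambda>s. \<Sum>k\<in>{1..N}. \<Sum>m\<in>{1..N}. f s k m * ?w k m) has_vector_derivative
         (\<Sum>k\<in>{1..N}. \<Sum>m\<in>{1..N}. f' k m * ?w k m)) F"
    by (intro has_vector_derivative_sum has_vector_derivative_mult_left d) auto
  then show ?thesis unfolding lind_decomp[OF ij, symmetric] .
qed

lemma cmod2_deriv:
  fixes g :: "real \<Rightarrow> complex"
  assumes "(g has_vector_derivative g') (at s)"
  shows "((\<lambda>s. (cmod (g s))\<^sup>2) has_real_derivative 2 * Re (cnj (g s) * g')) (at s)"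
proof -
  have r: "((\<lambda>s. Re (g s)) has_vector_derivative Re g') (at s)"
    by (rule bounded_linear.has_vector_derivative[OF bounded_linear_Re assms])
  have i: "((\<lambda>s. Im (g s)) has_vector_derivative Im g') (at s)"
    by (rule bounded_linear.has_vector_derivative[OF bounded_linear_Im assms])
  have r': "((\<lambda>s. Re (g s)) has_real_derivative Re g') (at s)"
    using r by (simp add: has_real_derivative_iff_has_vector_derivative)
  have i': "((\<lambda>s. Im (g s)) has_real_derivative Im g') (at s)"
    using i by (simp add: has_real_derivative_iff_has_vector_derivative)
  have "((\<lambda>s. Re (g s) * Re (g s) + Im (g s) * Im (g s)) has_real_derivative
          ((Re (g s) * Re g' + Re g' * Re (g s)) + (Im (g s) * Im g' + Im g' * Im (g s)))) (at s)"
    by (rule DERIV_cong[OF DERIV_add[OF DERIV_mult[OF r' r'] DERIV_mult[OF i' i']]]) (simp add: algebra_simps)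
  note dd = this
  have fe: "(\<lambda>s. (cmod (g s))\<^sup>2) = (\<lambda>s. Re (g s) * Re (g s) + Im (g s) * Im (g s))"
    by (simp add: fun_eq_iff cmod_power2 flip: power2_eq_square)
  show ?thesis unfolding fe by (rule DERIV_cong[OF dd]) (simp add: algebra_simps)
qed

lemma nrm_deriv:
  assumes d: "\<And>k m. k \<in> {1..N} \<Longrightarrow> m \<in> {1..N} \<Longrightarrow> ((\<lambda>s. f s k m) has_vector_derivative f' k m) (at s)"
  shows "((\<lambda>s. nrm N (f s)) has_real_derivative 2 * Re (inn N (f s) f')) (at s)"
proof -
  have "((\<lambda>s. \<Sum>i\<in>{1..N}. \<Sum>j\<in>{1..N}. (cmod (f s i j))\<^sup>2) has_real_derivative
     (\<Sum>i\<in>{1..N}. \<Sum>j\<in>{1..N}. 2 * Re (cnj (f s i j) * f' i j))) (at s)"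
    by (intro DERIV_sum cmod2_deriv d) auto
  then show ?thesis unfolding nrm_def inn_def by (simp add: Re_sum sum_distrib_left)
qed

context
  fixes N :: nat and v :: "nat \<Rightarrow> real" and zl zr \<beta> :: real
  assumes N2: "N \<ge> 2" and zl: "zl > 0" and zr: "zr > 0" and bp: "\<beta> > 0"
begin

abbreviation "LL \<equiv> lind N v zl zr \<beta>"
abbreviation "FF s b \<equiv> expL N v zl zr \<beta> s b"
definition "EE b s = nrm N (FF s b) + nrm N (LL (FF s b))"
definition "om = 2 / ((1 + KL N v zl zr \<beta>) * CC N v zl zr \<beta>)"

lemma om_pos: "om > 0"
  unfolding om_def using CC_pos[OF zl bp, of N v zr] KL_nonneg[of N v zl zr \<beta>] N2
  by (intro divide_pos_pos mult_pos_pos) auto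

lemma GG_deriv: assumes ij: "i \<in> {1..N}" "j \<in> {1..N}"
  shows "((\<lambda>s. LL (FF s b) i j) has_vector_derivative LL (LL (FF s b)) i j) (at s within X)"
  by (rule lind_deriv[OF ij]) (rule expL_deriv)

lemma EE_deriv: "((EE b) has_real_derivative
    - 2 * Dis N zl zr \<beta> (FF s b) - 2 * Dis N zl zr \<beta> (LL (FF s b))) (at s)"
proof -
  have "((EE b) has_real_derivative 2 * Re (inn N (FF s b) (LL (FF s b))) + 2 * Re (inn N (LL (FF s b)) (LL (LL (FF s b))))) (at s)"
    unfolding EE_def[abs_def]
    by (intro DERIV_add nrm_deriv expL_deriv GG_deriv) auto
  then show ?thesis unfolding dissip by simp
qed

lemma EE_ineq: "- 2 * Dis N zl zr \<beta> (FF s b) - 2 * Dis N zl zr \<beta> (LL (FF s b)) \<le> - om * EE b s"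
proof -
  let ?K = "KL N v zl zr \<beta>" and ?C = "CC N v zl zr \<beta>"
  let ?D = "Dis N zl zr \<beta> (FF s b) + Dis N zl zr \<beta> (LL (FF s b))"
  have K0: "?K \<ge> 0" by (rule KL_nonneg)
  have C0: "?C > 0" using CC_pos[OF zl bp, of N v zr] N2 by simp
  have "EE b s \<le> nrm N (FF s b) + ?K * nrm N (FF s b)"
    unfolding EE_def using lind_bound[of N v zl zr \<beta> "FF s b"] by simp
  also have "\<dots> = (1 + ?K) * nrm N (FF s b)" by (simp add: algebra_simps)
  also have "\<dots> \<le> (1 + ?K) * (?C * ?D)"
    using coerc[OF N2 zl less_imp_le[OF zr] bp, of "FF s b" v] K0 by (intro mult_left_mono) auto
  finally have "EE b s \<le> (1 + ?K) * ?C * ?D" by (simp add: mult.assoc)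
  then have "om * EE b s \<le> om * ((1 + ?K) * ?C * ?D)" using om_pos by (intro mult_left_mono) auto
  also have "\<dots> = 2 * ?D"
  proof -
    have P: "(1 + ?K) * ?C \<noteq> 0" using K0 C0 by simp
    have "om * ((1 + ?K) * ?C * ?D) = 2 / ((1 + ?K) * ?C) * ((1 + ?K) * ?C) * ?D"
      unfolding om_def by (simp only: mult.assoc)
    also have "\<dots> = 2 * ?D" using P by simp
    finally show ?thesis .
  qed
  finally show ?thesis by simp
qed

lemma EE_decay: assumes "s \<ge> 0" shows "EE b s \<le> EE b 0 * exp (- om * s)"
proof -
  let ?phi = "\<lambda>t. exp (om * t) * EE b t"
  have "?phi s \<le> ?phi 0"
  proof (rule DERIV_nonpos_imp_nonincreasing[OF assms])
    fix x
    have "(?phi has_real_derivative (exp (om * x) * om * EE b x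
        + exp (om * x) * (- 2 * Dis N zl zr \<beta> (FF x b) - 2 * Dis N zl zr \<beta> (LL (FF x b))))) (at x)"
      by (auto intro!: derivative_eq_intros EE_deriv)
    moreover have "exp (om * x) * om * EE b x
        + exp (om * x) * (- 2 * Dis N zl zr \<beta> (FF x b) - 2 * Dis N zl zr \<beta> (LL (FF x b))) \<le> 0"
    proof -
      have "exp (om * x) * (- 2 * Dis N zl zr \<beta> (FF x b) - 2 * Dis N zl zr \<beta> (LL (FF x b)))
          \<le> exp (om * x) * (- om * EE b x)"
        by (intro mult_left_mono EE_ineq) auto
      then show ?thesis by (simp add: algebra_simps)
    qed
    ultimately show "\<exists>y. (?phi has_real_derivative y) (at x) \<and> y \<le> 0" by blast
  qed
  then have "exp (om * s) * EE b s \<le> EE b 0" by simp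
  then show ?thesis by (simp add: exp_minus field_simps)
qed

end

lemma exp_integrable: "a > 0 \<Longrightarrow> (\<lambda>x. M * exp (- a * x) :: real) integrable_on {c..}"
  using integrable_on_exp_minus_to_infinity[of a c] by (rule integrable_on_mult_right)

lemma exp_integral: "a > 0 \<Longrightarrow> integral {c..} (\<lambda>x. M * exp (- a * x) :: real) = M * (exp (- a * c) / a)"
  using has_integral_exp_minus_to_infinity[of a c] by (simp add: integral_unique)

lemma decay_integrable:
  fixes f :: "real \<Rightarrow> complex"
  assumes cont: "continuous_on {c..} f" and a: "a > 0"
    and bd: "\<And>s. s \<ge> c \<Longrightarrow> norm (f s) \<le> M * exp (- a * s)"
  shows "f integrable_on {c..}"
proof (rule measurable_bounded_by_integrable_imp_integrable)
  show "f \<in> borel_measurable (lebesgue_on {c..})"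
    by (rule continuous_imp_measurable_on_sets_lebesgue[OF cont]) simp
  show "(\<lambda>x. M * exp (- a * x)) integrable_on {c..}" by (rule exp_integrable[OF a])
qed (use bd in auto)

lemma decay_to_zero:
  fixes x A c :: real
  assumes "c > 0" "\<And>T. T \<ge> 0 \<Longrightarrow> x \<le> A * exp (- c * T)"
  shows "x \<le> 0"
proof -
  have lim: "((\<lambda>T. A * exp (- c * T)) \<longlongrightarrow> A * 0) at_top"
  proof (intro tendsto_mult tendsto_const)
    have "filterlim (\<lambda>T. c * T) at_top at_top"
      by (rule filterlim_tendsto_pos_mult_at_top[OF tendsto_const \<open>c > 0\<close> filterlim_ident])
    then have "filterlim (\<lambda>T. - (c * T)) at_bot at_top"
      by (rule filterlim_compose[OF filterlim_uminus_at_bot_at_top])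
    then have "filterlim (\<lambda>T. - c * T) at_bot at_top" by simp
    then show "((\<lambda>T. exp (- c * T)) \<longlongrightarrow> 0) at_top"
      by (rule filterlim_compose[OF exp_at_bot])
  qed
  have "eventually (\<lambda>T. x \<le> A * exp (- c * T)) at_top"
    using eventually_ge_at_top[of "0::real"] by (rule eventually_mono) (rule assms(2))
  then have "x \<le> A * 0" by (rule tendsto_le[OF _ lim tendsto_const, rotated]) simp
  then show ?thesis by simp
qed

context
  fixes N :: nat and v :: "nat \<Rightarrow> real" and zl zr \<beta> :: real
  assumes N2: "N \<ge> 2" and zl: "zl > 0" and zr: "zr > 0" and bp: "\<beta> > 0"
begin

abbreviation "L9 \<equiv> lind N v zl zr \<beta>"
abbreviation "F9 s b \<equiv> expL N v zl zr \<beta> s b"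
abbreviation "E9 b s \<equiv> EE N v zl zr \<beta> b s"
abbreviation "om9 \<equiv> om N v zl zr \<beta>"

lemma om9: "om9 > 0" using om_pos[OF N2 zl zr bp] .

lemma E9_nonneg: "E9 b s \<ge> 0"
  using nrm_nonneg[of N "F9 s b"] nrm_nonneg[of N "L9 (F9 s b)"] by (simp add: EE_def[OF N2 zl zr bp])

lemma F_decay:
  assumes "s \<ge> 0" "i \<in> {1..N}" "j \<in> {1..N}"
  shows "cmod (F9 s b i j) \<le> sqrt (E9 b 0) * exp (- (om9 / 2) * s)"
    and "cmod (L9 (F9 s b) i j) \<le> sqrt (E9 b 0) * exp (- (om9 / 2) * s)"
proof -
  have e: "E9 b s \<le> E9 b 0 * exp (- om9 * s)" by (rule EE_decay[OF N2 zl zr bp assms(1)])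
  have sq: "sqrt (E9 b 0 * exp (- om9 * s)) = sqrt (E9 b 0) * exp (- (om9 / 2) * s)"
  proof -
    have "exp (- om9 * s) = (exp (- (om9 / 2) * s))\<^sup>2"
      by (simp add: power2_eq_square exp_add[symmetric])
    then show ?thesis by (simp add: real_sqrt_mult)
  qed
  have "(cmod (F9 s b i j))\<^sup>2 \<le> E9 b s"
    using entry_le[OF assms(2,3), of "F9 s b"] nrm_nonneg[of N "L9 (F9 s b)"] unfolding EE_def[OF N2 zl zr bp] by linarith
  then have "(cmod (F9 s b i j))\<^sup>2 \<le> E9 b 0 * exp (- om9 * s)" using e by linarith
  then show "cmod (F9 s b i j) \<le> sqrt (E9 b 0) * exp (- (om9 / 2) * s)"
    unfolding sq[symmetric] by (rule real_le_rsqrt)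
  have "(cmod (L9 (F9 s b) i j))\<^sup>2 \<le> E9 b s"
    using entry_le[OF assms(2,3), of "L9 (F9 s b)"] nrm_nonneg[of N "F9 s b"] unfolding EE_def[OF N2 zl zr bp] by linarith
  then have "(cmod (L9 (F9 s b) i j))\<^sup>2 \<le> E9 b 0 * exp (- om9 * s)" using e by linarith
  then show "cmod (L9 (F9 s b) i j) \<le> sqrt (E9 b 0) * exp (- (om9 / 2) * s)"
    unfolding sq[symmetric] by (rule real_le_rsqrt)
qed

lemma F_cont: "i \<in> {1..N} \<Longrightarrow> j \<in> {1..N} \<Longrightarrow> continuous_on S (\<lambda>s. F9 s b i j)"
  by (rule continuous_on_vector_derivative) (rule expL_deriv)

lemma G_cont: "i \<in> {1..N} \<Longrightarrow> j \<in> {1..N} \<Longrightarrow> continuous_on S (\<lambda>s. L9 (F9 s b) i j)"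
  by (rule continuous_on_vector_derivative) (rule GG_deriv[OF N2 zl zr bp])

lemma F_int: assumes "i \<in> {1..N}" "j \<in> {1..N}" "T \<ge> 0" shows "(\<lambda>s. F9 s b i j) integrable_on {T..}"
proof (rule decay_integrable[where a="om9/2" and M="sqrt (E9 b 0)"])
  show "continuous_on {T..} (\<lambda>s. F9 s b i j)" by (rule F_cont[OF assms(1,2)])
  show "om9 / 2 > 0" using om9 by simp
  fix s assume "T \<le> s"
  then show "cmod (F9 s b i j) \<le> sqrt (E9 b 0) * exp (- (om9 / 2) * s)"
    using F_decay(1)[OF _ assms(1,2)] assms(3) by simp
qed

lemma G_int: assumes "i \<in> {1..N}" "j \<in> {1..N}" "T \<ge> 0" shows "(\<lambda>s. L9 (F9 s b) i j) integrable_on {T..}"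
proof (rule decay_integrable[where a="om9/2" and M="sqrt (E9 b 0)"])
  show "continuous_on {T..} (\<lambda>s. L9 (F9 s b) i j)" by (rule G_cont[OF assms(1,2)])
  show "om9 / 2 > 0" using om9 by simp
  fix s assume "T \<le> s"
  then show "cmod (L9 (F9 s b) i j) \<le> sqrt (E9 b 0) * exp (- (om9 / 2) * s)"
    using F_decay(2)[OF _ assms(1,2)] assms(3) by simp
qed

lemma F_zero: "F9 0 b i j = b i j"
proof -
  have "F9 0 b i j = (\<Sum>k. cf N v zl zr \<beta> b i j k * 0 ^ k)" unfolding expL_eq by simp
  also have "\<dots> = cf N v zl zr \<beta> b i j 0" by (rule powser_zero)
  finally show ?thesis by (simp add: cf_def)
qed

lemma integral_mult_left_c:
  fixes f :: "real \<Rightarrow> complex"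
  assumes "f integrable_on S"
  shows "integral S f * w = integral S (\<lambda>s. f s * w)"
  using has_integral_mult_left[OF integrable_integral[OF assms], of w] by (simp add: integral_unique)

lemma R_eq:
  assumes ij: "i \<in> {1..N}" "j \<in> {1..N}"
  shows "L9 (\<lambda>k m. integral {0..} (\<lambda>s. F9 s b k m)) i j = - b i j"
proof -
  let ?w = "\<lambda>k m. lind N v zl zr \<beta> (Em k m) i j"
  let ?g = "\<lambda>s. L9 (F9 s b) i j"
  let ?h = "\<lambda>s. F9 s b i j"
  let ?M = "sqrt (E9 b 0)" and ?c = "om9 / 2"
  have c0: "?c > 0" using om9 by simp
  have M0: "?M \<ge> 0" using E9_nonneg by simp
  have "L9 (\<lambda>k m. integral {0..} (\<lambda>s. F9 s b k m)) i j
      = (\<Sum>k\<in>{1..N}. \<Sum>m\<in>{1..N}. integral {0..} (\<lambda>s. F9 s b k m) * ?w k m)"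
    by (rule lind_decomp[OF ij])
  also have "\<dots> = (\<Sum>k\<in>{1..N}. \<Sum>m\<in>{1..N}. integral {0..} (\<lambda>s. F9 s b k m * ?w k m))"
    by (intro sum.cong refl integral_mult_left_c F_int) auto
  also have "\<dots> = (\<Sum>k\<in>{1..N}. integral {0..} (\<lambda>s. \<Sum>m\<in>{1..N}. F9 s b k m * ?w k m))"
    by (intro sum.cong refl integral_sum[symmetric] integrable_on_mult_left F_int) auto
  also have "\<dots> = integral {0..} (\<lambda>s. \<Sum>k\<in>{1..N}. \<Sum>m\<in>{1..N}. F9 s b k m * ?w k m)"
    by (intro integral_sum[symmetric] integrable_sum integrable_on_mult_left F_int) auto
  also have "\<dots> = integral {0..} ?g"
    by (intro integral_cong lind_decomp[OF ij, symmetric])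
  finally have step1: "L9 (\<lambda>k m. integral {0..} (\<lambda>s. F9 s b k m)) i j = integral {0..} ?g" .
  have key: "cmod (integral {0..} ?g + b i j) \<le> (?M + ?M / ?c) * exp (- ?c * T)" if T: "T \<ge> 0" for T
  proof -
    have h1: "(?g has_integral (?h T - ?h 0)) {0..T}"
      by (rule fundamental_theorem_of_calculus[OF T]) (rule expL_deriv[OF ij])
    have h2: "(?g has_integral integral {T..} ?g) {T..}"
      by (rule integrable_integral[OF G_int[OF ij T]])
    have "(?g has_integral ((?h T - ?h 0) + integral {T..} ?g)) ({0..T} \<union> {T..})"
    proof (rule has_integral_Un[OF h1 h2])
      have "{0..T} \<inter> {T..} = {T}" using T by auto
      then show "negligible ({0..T} \<inter> {T..})" by simp
    qed
    moreover have "{0..T} \<union> {T..} = {0..}" using T by auto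
    ultimately have "integral {0..} ?g = (?h T - ?h 0) + integral {T..} ?g"
      by (simp add: integral_unique)
    then have eq: "integral {0..} ?g + b i j = ?h T + integral {T..} ?g"
      using F_zero[of b i j] by simp
    have b1: "cmod (?h T) \<le> ?M * exp (- ?c * T)" using F_decay(1)[OF T ij] by simp
    have "cmod (integral {T..} ?g) \<le> integral {T..} (\<lambda>s. ?M * exp (- ?c * s))"
      by (rule integral_norm_bound_integral[OF G_int[OF ij T] exp_integrable[OF c0]])
         (use F_decay(2)[OF _ ij] T in auto)
    also have "\<dots> = ?M * (exp (- ?c * T) / ?c)" by (rule exp_integral[OF c0])
    finally have b2: "cmod (integral {T..} ?g) \<le> ?M / ?c * exp (- ?c * T)" by (simp add: field_simps)
    show ?thesis unfolding eq using norm_triangle_ineq[of "?h T" "integral {T..} ?g"] b1 b2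
      by (simp add: distrib_right)
  qed
  have "cmod (integral {0..} ?g + b i j) \<le> 0"
    by (rule decay_to_zero[OF c0 key])
  then have "integral {0..} ?g = - b i j" by (simp add: add_eq_0_iff)
  then show ?thesis using step1 by simp
qed

end

lemma H_left:
  assumes i: "i \<in> {1..N}"
  shows "mmul N (hmat N v) a i j = complex_of_real (v i) * a i j
     - (if 2 \<le> i then a (i-1) j else 0) - (if i+1 \<le> N then a (i+1) j else 0)"
proof -
  have "mmul N (hmat N v) a i j = (\<Sum>k\<in>{1..N}. (if k = i then complex_of_real (v i) * a k j else 0)
       + (if 2 \<le> i then (if k = i - 1 then - a k j else 0) else 0)
       + (if k = i + 1 then - a k j else 0))"
    unfolding mmul_def using i by (intro sum.cong refl) (auto simp: hmat_def)
  also have "\<dots> = complex_of_real (v i) * a i j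
     - (if 2 \<le> i then a (i-1) j else 0) - (if i+1 \<le> N then a (i+1) j else 0)"
    using i by (auto simp: sum.distrib)
  finally show ?thesis .
qed

lemma H_right:
  assumes j: "j \<in> {1..N}"
  shows "mmul N a (hmat N v) i j = a i j * complex_of_real (v j)
     - (if 2 \<le> j then a i (j-1) else 0) - (if j+1 \<le> N then a i (j+1) else 0)"
proof -
  have "mmul N a (hmat N v) i j = (\<Sum>k\<in>{1..N}. (if k = j then a i k * complex_of_real (v j) else 0)
       + (if 2 \<le> j then (if k = j - 1 then - a i k else 0) else 0)
       + (if k = j + 1 then - a i k else 0))"
    unfolding mmul_def using j by (intro sum.cong refl) (auto simp: hmat_def)
  also have "\<dots> = a i j * complex_of_real (v j)
     - (if 2 \<le> j then a i (j-1) else 0) - (if j+1 \<le> N then a i (j+1) else 0)"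
    using j by (auto simp: sum.distrib)
  finally show ?thesis .
qed

definition r0 :: "nat \<Rightarrow> real \<Rightarrow> real \<Rightarrow> real \<Rightarrow> real \<Rightarrow> real \<Rightarrow> nat \<Rightarrow> real" where
  "r0 N zl zr \<beta> J0 ail n = (2*ail - J0)/(2*zl)
     - J0/2 * (\<beta> * (real n - 1) + (if 2 \<le> n then zl else 0) + (if n = N then zr else 0))"

definition R0 :: "nat \<Rightarrow> real \<Rightarrow> real \<Rightarrow> real \<Rightarrow> real \<Rightarrow> real \<Rightarrow> cmat" where
  "R0 N zl zr \<beta> J0 ail = (\<lambda>i j. if i = j then complex_of_real (r0 N zl zr \<beta> J0 ail i)
     else if i = j + 1 then \<i> * complex_of_real (J0/2)
     else if j = i + 1 then - \<i> * complex_of_real (J0/2) else 0)"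

context
  fixes N :: nat and v :: "nat \<Rightarrow> real" and zl zr \<beta> J0 ail air :: real
  assumes N2: "N \<ge> 2" and zl: "zl > 0" and zr: "zr > 0"
    and cons: "J0 * (zl + zr + zl*zr*(zl+zr+\<beta>*(real N - 1))) = 2*(ail*zr - air*zl)"
begin

abbreviation "RR \<equiv> R0 N zl zr \<beta> J0 ail"
abbreviation "rr \<equiv> r0 N zl zr \<beta> J0 ail"
definition "cc = \<i> * complex_of_real (J0/2)"

lemma R_diag: "RR n n = complex_of_real (rr n)" by (simp add: R0_def)
lemma R_sub: "RR (n+1) n = cc" by (simp add: R0_def cc_def)
lemma R_sup: "RR n (n+1) = - cc" by (simp add: R0_def cc_def)
lemma R_sub': "2 \<le> n \<Longrightarrow> RR n (n-1) = cc" by (simp add: R0_def cc_def)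
lemma R_sup': "2 \<le> n \<Longrightarrow> RR (n-1) n = - cc" by (auto simp: R0_def cc_def)
lemma R_far: "i \<noteq> j \<Longrightarrow> i \<noteq> j + 1 \<Longrightarrow> j \<noteq> i + 1 \<Longrightarrow> RR i j = 0" by (simp add: R0_def)

lemma rN: "rr N = (J0 + 2*air)/(2*zr)"
proof -
  have "rr N = (2*ail - J0)/(2*zl) - J0/2 * (\<beta> * (real N - 1) + zl + zr)"
    using N2 by (simp add: r0_def)
  also have "\<dots> = (J0 + 2*air)/(2*zr)"
    using zl zr cons by (simp add: field_simps)
  finally show ?thesis .
qed

lemma r1: "rr 1 = (2*ail - J0)/(2*zl)" using N2 by (simp add: r0_def)

lemma rstep: "n \<ge> 1 \<Longrightarrow> n + 1 \<le> N \<Longrightarrow> rr (n+1) - rr n = - J0/2 * (\<beta> + (if n = 1 then zl else 0) + (if n + 1 = N then zr else 0))"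
  by (auto simp: r0_def algebra_simps)

lemma lind_R0:
  assumes i: "i \<in> {1..N}" and j: "j \<in> {1..N}"
  shows "lind N v zl zr \<beta> RR i j = - (complex_of_real (2*ail) * proj 1 i j + complex_of_real (2*air) * proj N i j)
     - \<i> * complex_of_real (v i - v j) * RR i j"
proof -
  have L: "lind N v zl zr \<beta> RR i j = - \<i> * ((complex_of_real (v i) * RR i j
     - (if 2 \<le> i then RR (i-1) j else 0) - (if i+1 \<le> N then RR (i+1) j else 0))
     - (RR i j * complex_of_real (v j)
     - (if 2 \<le> j then RR i (j-1) else 0) - (if j+1 \<le> N then RR i (j+1) else 0)))
     - complex_of_real (gg N zl zr i + gg N zl zr j) * RR i j
     + complex_of_real \<beta> * ((if i = j then RR i i else 0) - RR i j)"
    unfolding lind_box[OF i j] H_left[OF i] H_right[OF j] ..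
  consider "i = j" | "i = j + 1" | "j = i + 1" | "i = j + 2" | "j = i + 2"
    | "i \<noteq> j" "i \<noteq> j + 1" "j \<noteq> i + 1" "i \<noteq> j + 2" "j \<noteq> i + 2" by auto
  then show ?thesis
  proof cases
    case 1
    have v: "RR i i = complex_of_real (rr i)" "2 \<le> i \<Longrightarrow> RR (i - Suc 0) i = - cc" "RR (Suc i) i = cc"
      "2 \<le> i \<Longrightarrow> RR i (i - Suc 0) = cc" "RR i (Suc i) = - cc"
      using R_sup[of i] R_diag R_sub[of i] R_sup'[of i] R_sub'[of i] by auto
    have L': "lind N v zl zr \<beta> RR i i = - \<i> * ((complex_of_real (v i) * RR i i
     - (if 2 \<le> i then RR (i-1) i else 0) - (if i+1 \<le> N then RR (i+1) i else 0))
     - (RR i i * complex_of_real (v i)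
     - (if 2 \<le> i then RR i (i-1) else 0) - (if i+1 \<le> N then RR i (i+1) else 0)))
     - complex_of_real (gg N zl zr i + gg N zl zr i) * RR i i
     + complex_of_real \<beta> * (RR i i - RR i i)"
      using L unfolding 1[symmetric] by simp
    have e: "lind N v zl zr \<beta> RR i j = - \<i> * (2 * (if 2 \<le> i then cc else 0) - 2 * (if i + 1 \<le> N then cc else 0))
        - complex_of_real (2 * gg N zl zr i * rr i)"
      unfolding 1[symmetric] L' by (cases "2 \<le> i"; simp add: v algebra_simps)
    have ic: "\<i> * cc = - complex_of_real (J0/2)" by (simp add: cc_def)
    consider "i = 1" | "i = N" | "2 \<le> i" "i + 1 \<le> N" using i N2 by force
    then show ?thesis
    proof cases
      case a: 1
      have "lind N v zl zr \<beta> RR i j = 2 * (\<i> * cc) - complex_of_real (2 * zl * rr 1)"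
        unfolding e using a N2 by (simp add: gg_def algebra_simps)
      also have "\<dots> = - complex_of_real (2 * ail)" unfolding ic r1 using zl
        by (simp add: field_simps)
      finally show ?thesis using a 1 N2 by (simp add: proj_def)
    next
      case a: 2
      have "lind N v zl zr \<beta> RR i j = - 2 * (\<i> * cc) - complex_of_real (2 * zr * rr N)"
        unfolding e using a N2 by (simp add: gg_def algebra_simps)
      also have "\<dots> = - complex_of_real (2 * air)" unfolding ic rN using zr
        by (simp add: field_simps)
      finally show ?thesis using a 1 N2 by (simp add: proj_def)
    next
      case a: 3
      have "gg N zl zr i = 0" using a by (simp add: gg_def)
      then show ?thesis unfolding e using a 1 by (simp add: proj_def)
    qed
  next
    case 2
    have j1: "j + 1 \<le> N" "j \<ge> 1" using 2 i j by auto
    have v: "RR i j = cc" "RR (i-1) j = complex_of_real (rr j)" "RR (i+1) j = 0"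
      "RR i (j+1) = complex_of_real (rr (j+1))"
      using 2 R_sub R_diag R_far[of i "j+1"] R_far[of "i+1" j] by auto
    have v2: "RR i (j-1) = 0" if "2 \<le> j"
      by (rule R_far) (use 2 that in auto)
    have g: "gg N zl zr i + gg N zl zr j = (if j = 1 then zl else 0) + (if j + 1 = N then zr else 0)"
      using 2 j1 by (auto simp: gg_def)
    have rs: "rr (j+1) - rr j = - J0/2 * (\<beta> + (if j = 1 then zl else 0) + (if j + 1 = N then zr else 0))"
      by (rule rstep[OF j1(2) j1(1)])
    have "lind N v zl zr \<beta> RR i j = - \<i> * (complex_of_real (v i) * cc - complex_of_real (rr j)
       - (cc * complex_of_real (v j) - complex_of_real (rr (j+1))))
       - complex_of_real ((if j = 1 then zl else 0) + (if j + 1 = N then zr else 0)) * cc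
       + complex_of_real \<beta> * (0 - cc)"
      unfolding L v g using 2 j1 v2 by auto
    also have "\<dots> = - \<i> * complex_of_real (v i - v j) * cc
       - \<i> * complex_of_real (rr (j+1) - rr j)
       - complex_of_real ((if j = 1 then zl else 0) + (if j + 1 = N then zr else 0) + \<beta>) * cc"
      by (simp add: algebra_simps)
    also have "\<dots> = - \<i> * complex_of_real (v i - v j) * cc"
      unfolding rs cc_def by (simp add: algebra_simps)
    finally show ?thesis using 2 v by (simp add: proj_def)
  next
    case 3
    have j1: "i + 1 \<le> N" "i \<ge> 1" using 3 i j by auto
    have v: "RR i j = - cc" "RR (i+1) j = complex_of_real (rr (i+1))"
      "RR i (j-1) = complex_of_real (rr i)" "RR i (j+1) = 0"
      using 3 R_sup R_diag R_far[of i "j+1"] by auto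
    have v2: "RR (i-1) j = 0" if "2 \<le> i"
      by (rule R_far) (use 3 that in auto)
    have g: "gg N zl zr i + gg N zl zr j = (if i = 1 then zl else 0) + (if i + 1 = N then zr else 0)"
      using 3 j1 by (auto simp: gg_def)
    have rs: "rr (i+1) - rr i = - J0/2 * (\<beta> + (if i = 1 then zl else 0) + (if i + 1 = N then zr else 0))"
      by (rule rstep[OF j1(2) j1(1)])
    have "lind N v zl zr \<beta> RR i j = - \<i> * (complex_of_real (v i) * (- cc) - complex_of_real (rr (i+1))
       - ((- cc) * complex_of_real (v j) - complex_of_real (rr i)))
       - complex_of_real ((if i = 1 then zl else 0) + (if i + 1 = N then zr else 0)) * (- cc)
       + complex_of_real \<beta> * (0 - (- cc))"
      unfolding L v g using 3 j1 v2 by auto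
    also have "\<dots> = - \<i> * complex_of_real (v i - v j) * (- cc)
       + \<i> * complex_of_real (rr (i+1) - rr i)
       + complex_of_real ((if i = 1 then zl else 0) + (if i + 1 = N then zr else 0) + \<beta>) * cc"
      by (simp add: algebra_simps)
    also have "\<dots> = - \<i> * complex_of_real (v i - v j) * (- cc)"
      unfolding rs cc_def by (simp add: algebra_simps)
    finally show ?thesis using 3 v by (simp add: proj_def)
  next
    case 4
    then have "RR (i-1) j = cc" "RR i (j+1) = cc" "RR i j = 0" "RR (i+1) j = 0" "RR i (j-1) = 0"
      using R_sub R_far by auto
    then show ?thesis unfolding L using 4 i j by (auto simp: proj_def)
  next
    case 5
    then have "RR i (j-1) = - cc" "RR (i+1) j = - cc" "RR i j = 0" "RR (i-1) j = 0" "RR i (j+1) = 0"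
      using R_sup R_far by auto
    then show ?thesis unfolding L using 5 i j by (auto simp: proj_def)
  next
    case 6
    then have "RR i j = 0" "2 \<le> i \<Longrightarrow> RR (i-1) j = 0" "RR (i+1) j = 0"
       "2 \<le> j \<Longrightarrow> RR i (j-1) = 0" "RR i (j+1) = 0"
      using R_far by auto
    then show ?thesis unfolding L using 6 i j by (auto simp: proj_def)
  qed
qed

end

lemma lind_diff:
  assumes ij: "i \<in> {1..N}" "j \<in> {1..N}"
  shows "lind N v zl zr \<beta> (\<lambda>i j. a i j - b i j) i j = lind N v zl zr \<beta> a i j - lind N v zl zr \<beta> b i j"
proof -
  let ?w = "\<lambda>k m. lind N v zl zr \<beta> (Em k m) i j"
  have "lind N v zl zr \<beta> (\<lambda>i j. a i j - b i j) i j = (\<Sum>k\<in>{1..N}. \<Sum>m\<in>{1..N}. (a k m - b k m) * ?w k m)"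
    by (rule lind_decomp[OF ij])
  also have "\<dots> = (\<Sum>k\<in>{1..N}. \<Sum>m\<in>{1..N}. a k m * ?w k m) - (\<Sum>k\<in>{1..N}. \<Sum>m\<in>{1..N}. b k m * ?w k m)"
    by (simp add: left_diff_distrib sum_subtractf)
  also have "\<dots> = lind N v zl zr \<beta> a i j - lind N v zl zr \<beta> b i j"
    using lind_decomp[OF ij, of v zl zr \<beta> a] lind_decomp[OF ij, of v zl zr \<beta> b] by simp
  finally show ?thesis .
qed

lemma amgm: fixes x y \<beta> :: real assumes "\<beta> > 0"
  shows "x * y \<le> \<beta> / 2 * x\<^sup>2 + y\<^sup>2 / (2 * \<beta>)"
proof -
  have "0 \<le> (\<beta> * x - y)\<^sup>2" by simp
  then have "2 * \<beta> * (x * y) \<le> \<beta>\<^sup>2 * x\<^sup>2 + y\<^sup>2" by (simp add: power2_eq_square algebra_simps)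
  then have "(2 * \<beta> * (x * y)) / (2 * \<beta>) \<le> (\<beta>\<^sup>2 * x\<^sup>2 + y\<^sup>2) / (2 * \<beta>)"
    using assms by (intro divide_right_mono) auto
  moreover have "(2 * \<beta> * (x * y)) / (2 * \<beta>) = x * y" using assms by simp
  moreover have "(\<beta>\<^sup>2 * x\<^sup>2 + y\<^sup>2) / (2 * \<beta>) = \<beta> / 2 * x\<^sup>2 + y\<^sup>2 / (2 * \<beta>)"
    using assms by (simp add: add_divide_distrib power2_eq_square)
  ultimately show ?thesis by simp
qed

lemma sum_adj_le:
  fixes c :: real and N :: nat
  assumes "c \<ge> 0" "i \<in> {1..N}"
  shows "(\<Sum>j\<in>{1..N}. if j = i + 1 \<or> i = j + 1 then c else 0) \<le> 2 * c"
proof -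
  have "(\<Sum>j\<in>{1..N}. if j = i + 1 \<or> i = j + 1 then c else 0)
     \<le> (\<Sum>j\<in>{1..N}. (if j = i + 1 then c else 0) + (if j = i - 1 then c else 0))"
    using assms by (intro sum_mono) auto
  also have "\<dots> = (\<Sum>j\<in>{1..N}. if j = i + 1 then c else 0) + (\<Sum>j\<in>{1..N}. if j = i - 1 then c else 0)"
    by (rule sum.distrib)
  also have "\<dots> \<le> c + c" using assms by (intro add_mono) (simp_all add: sum.delta)
  finally show ?thesis by simp
qed

lemma vnorm_ge: assumes "bounded (range v)" "n \<ge> 1" shows "\<bar>v n\<bar> \<le> vnorm v"
proof -
  from assms(1) obtain B where B: "\<forall>x\<in>range v. norm x \<le> B" unfolding bounded_iff by (elim exE)
  have "\<bar>v m\<bar> \<le> B" for m using B by simp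
  then have bd: "bdd_above ((\<lambda>n. \<bar>v n\<bar>) ` {1..})" by (intro bdd_aboveI[of _ B]) blast
  have n: "n \<in> {1..}" using assms(2) by simp
  show ?thesis unfolding vnorm_def by (rule cSUP_upper[OF n bd])
qed

theorem mainTheorem16:
  fixes v :: "nat \<Rightarrow> real" and N :: nat and ail aol air aor \<epsilon> :: real
  assumes "bounded (range v)"
    and "N \<ge> 2"
    and "ail \<ge> 0" "aol \<ge> 0" "air \<ge> 0" "aor \<ge> 0"
    and "ail + aol > 0" "air + aor > 0"
    and "ail * aor - aol * air > 0"
    and "\<epsilon> > 4 * vnorm v * (3 + max (max (ail + aol) (air + aor)) 1)"
  shows "Jcur N v ail aol air aor (\<epsilon> * real N)
           \<ge> 4 * (ail * aor - aol * air)
               / ((ail + aol) + (air + aor) + (ail + aol) * (air + aor)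
                    * ((ail + aol) + (air + aor) + \<epsilon> * real N * (real N - 1)))
             * (1 / 2 - 2 * vnorm v * (3 + max (max (ail + aol) (air + aor)) 1) / \<epsilon>)
      \<and> 4 * (ail * aor - aol * air)
               / ((ail + aol) + (air + aor) + (ail + aol) * (air + aor)
                    * ((ail + aol) + (air + aor) + \<epsilon> * real N * (real N - 1)))
             * (1 / 2 - 2 * vnorm v * (3 + max (max (ail + aol) (air + aor)) 1) / \<epsilon>) > 0"
proof -
  define zl where "zl = ail + aol"
  define zr where "zr = air + aor"
  define \<beta> where "\<beta> = \<epsilon> * real N"
  define D where "D = ail * aor - aol * air"
  define den where "den = zl + zr + zl * zr * (zl + zr + \<epsilon> * real N * (real N - 1))"
  define J0 where "J0 = 2 * D / den"
  define vn where "vn = vnorm v"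
  define C' where "C' = 3 + max (max zl zr) 1"
  note N2 = assms(2)
  have zl: "zl > 0" and zr: "zr > 0" using assms(7,8) unfolding zl_def zr_def by auto
  have D: "D > 0" using assms(9) unfolding D_def .
  have vn0: "vn \<ge> 0" unfolding vn_def using vnorm_ge[OF assms(1), of 1] by simp
  have vnb: "\<bar>v n\<bar> \<le> vn" if "n \<ge> 1" for n unfolding vn_def by (rule vnorm_ge[OF assms(1) that])
  have C'4: "C' \<ge> 4" unfolding C'_def by (simp add: le_max_iff_disj)
  have eps: "\<epsilon> > 4 * vn * C'" using assms(10) unfolding vn_def C'_def zl_def zr_def .
  have "0 \<le> 4 * vn * C'" using vn0 C'4 by simp
  then have eps0: "\<epsilon> > 0" using eps by linarith
  have bp: "\<beta> > 0" unfolding \<beta>_def using eps0 N2 by simp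
  have den: "den > 0" unfolding den_def using zl zr eps0 N2
    by (intro add_pos_nonneg add_pos_pos mult_nonneg_nonneg) auto
  have J00: "J0 \<ge> 0" unfolding J0_def using D den by simp
  have cons: "J0 * (zl + zr + zl*zr*(zl+zr+\<beta>*(real N - 1))) = 2*(ail*zr - air*zl)"
    unfolding J0_def \<beta>_def using den unfolding den_def D_def zl_def zr_def by (simp add: field_simps)
  define a0 where "a0 = (\<lambda>i j. complex_of_real (2 * ail) * proj 1 i j + complex_of_real (2 * air) * proj N i j)"
  define R where "R = (\<lambda>i j. integral {0..} (\<lambda>s. expL N v zl zr \<beta> s a0 i j))"
  have J: "Jcur N v ail aol air aor (\<epsilon> * real N) = 2 * Im (R 2 1)"
    unfolding Jcur_def Rinf_def R_def a0_def zl_def zr_def \<beta>_def Let_def by simp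
  have LR: "lind N v zl zr \<beta> R i j = - a0 i j" if "i \<in> {1..N}" "j \<in> {1..N}" for i j
    unfolding R_def by (rule R_eq[OF N2 zl zr bp that])
  let ?R0 = "R0 N zl zr \<beta> J0 ail"
  define X where "X = (\<lambda>i j. R i j - ?R0 i j)"
  define Y where "Y = (\<lambda>i j. \<i> * complex_of_real (v i - v j) * ?R0 i j)"
  have LX: "lind N v zl zr \<beta> X i j = Y i j" if ij: "i \<in> {1..N}" "j \<in> {1..N}" for i j
    unfolding X_def lind_diff[OF ij] LR[OF ij] lind_R0[OF N2 zl zr cons ij] Y_def a0_def by simp
  have Yd: "(cmod (Y i j))\<^sup>2 \<le> (if j = i + 1 \<or> i = j + 1 then vn\<^sup>2 * J0\<^sup>2 else 0)"
    if ij: "i \<in> {1..N}" "j \<in> {1..N}" for i j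
  proof (cases "j = i + 1 \<or> i = j + 1")
    case True
    then have r: "cmod (?R0 i j) = J0 / 2" using J00 by (auto simp: R0_def norm_mult)
    have "\<bar>v i - v j\<bar> \<le> 2 * vn" using vnb[of i] vnb[of j] ij by auto
    moreover have "cmod (Y i j) = \<bar>v i - v j\<bar> * (J0 / 2)"
      unfolding Y_def norm_mult r norm_of_real by simp
    ultimately have "cmod (Y i j) \<le> 2 * vn * (J0 / 2)"
      using J00 by (metis mult_right_mono zero_le_divide_iff zero_le_numeral)
    then have "(cmod (Y i j))\<^sup>2 \<le> (vn * J0)\<^sup>2" by (intro power_mono) auto
    then show ?thesis using True by (simp add: power_mult_distrib)
  next
    case False
    then have "Y i j = 0" by (cases "i = j") (auto simp: Y_def R0_def)
    then show ?thesis by simp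
  qed
  have Ysum: "(\<Sum>i\<in>{1..N}. \<Sum>j\<in>{1..N}. (cmod (Y i j))\<^sup>2) \<le> real N * (2 * (vn\<^sup>2 * J0\<^sup>2))"
  proof -
    have "(\<Sum>i\<in>{1..N}. \<Sum>j\<in>{1..N}. (cmod (Y i j))\<^sup>2) \<le> (\<Sum>i\<in>{1..N}. 2 * (vn\<^sup>2 * J0\<^sup>2))"
    proof (rule sum_mono)
      fix i assume i: "i \<in> {1..N}"
      have "(\<Sum>j\<in>{1..N}. (cmod (Y i j))\<^sup>2) \<le> (\<Sum>j\<in>{1..N}. if j = i + 1 \<or> i = j + 1 then vn\<^sup>2 * J0\<^sup>2 else 0)"
        by (intro sum_mono Yd i)
      also have "\<dots> \<le> 2 * (vn\<^sup>2 * J0\<^sup>2)" by (rule sum_adj_le[OF _ i]) simp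
      finally show "(\<Sum>j\<in>{1..N}. (cmod (Y i j))\<^sup>2) \<le> 2 * (vn\<^sup>2 * J0\<^sup>2)" .
    qed
    then show ?thesis by simp
  qed
  have Ydiag: "Y i i = 0" for i by (simp add: Y_def)
  have "\<beta> * offn N X \<le> Dis N zl zr \<beta> X" using Dis_ge_off[of zl zr] zl zr by auto
  also have "\<dots> = - Re (inn N X (lind N v zl zr \<beta> X))" using dissip[of N X v zl zr \<beta>] by simp
  also have "\<dots> = - Re (inn N X Y)" unfolding inn_def using LX by (intro arg_cong[where f="\<lambda>x. - Re x"] sum.cong refl) auto
  also have "\<dots> \<le> cmod (inn N X Y)" by (simp add: abs_Re_le_cmod[THEN abs_le_D2])
  also have "\<dots> \<le> (\<Sum>i\<in>{1..N}. \<Sum>j\<in>{1..N}. cmod (X i j) * cmod (Y i j))"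
    unfolding inn_def by (rule order_trans[OF norm_sum sum_mono[OF order_trans[OF norm_sum]]]) (simp add: norm_mult)
  also have "\<dots> \<le> (\<Sum>i\<in>{1..N}. \<Sum>j\<in>{1..N}. \<beta> / 2 * (if i = j then 0 else (cmod (X i j))\<^sup>2) + (cmod (Y i j))\<^sup>2 / (2 * \<beta>))"
  proof (intro sum_mono)
    fix i j
    show "cmod (X i j) * cmod (Y i j) \<le> \<beta> / 2 * (if i = j then 0 else (cmod (X i j))\<^sup>2) + (cmod (Y i j))\<^sup>2 / (2 * \<beta>)"
      using amgm[OF bp, of "cmod (X i j)" "cmod (Y i j)"] Ydiag by (cases "i = j") auto
  qed
  also have "\<dots> = \<beta> / 2 * offn N X + (\<Sum>i\<in>{1..N}. \<Sum>j\<in>{1..N}. (cmod (Y i j))\<^sup>2) / (2 * \<beta>)"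
    unfolding offn_def by (simp add: sum.distrib sum_distrib_left sum_divide_distrib)
  finally have "\<beta> * offn N X \<le> \<beta> / 2 * offn N X + (\<Sum>i\<in>{1..N}. \<Sum>j\<in>{1..N}. (cmod (Y i j))\<^sup>2) / (2 * \<beta>)" .
  then have "\<beta> / 2 * offn N X \<le> (\<Sum>i\<in>{1..N}. \<Sum>j\<in>{1..N}. (cmod (Y i j))\<^sup>2) / (2 * \<beta>)" by simp
  also have "\<dots> \<le> real N * (2 * (vn\<^sup>2 * J0\<^sup>2)) / (2 * \<beta>)" using Ysum bp by (intro divide_right_mono) auto
  finally have off: "offn N X \<le> 2 * real N * vn\<^sup>2 * J0\<^sup>2 / \<beta>\<^sup>2" using bp
    by (simp add: field_simps power2_eq_square)
  have X21: "(cmod (X 2 1))\<^sup>2 \<le> offn N X" by (rule offentry_le) (use N2 in auto)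
  have "2 * real N * vn\<^sup>2 * J0\<^sup>2 / \<beta>\<^sup>2 = 2 / real N * (vn * J0 / \<epsilon>)\<^sup>2"
    unfolding \<beta>_def using N2 eps0 by (simp add: field_simps power2_eq_square)
  also have "\<dots> \<le> (vn * J0 / \<epsilon>)\<^sup>2" 
  proof (rule mult_left_le_one_le)
    show "0 \<le> (vn * J0 / \<epsilon>)\<^sup>2" by simp
    show "0 \<le> 2 / real N" by simp
    have "real N \<ge> 2" using N2 by simp
    then show "2 / real N \<le> 1" by (simp add: divide_le_eq)
  qed
  finally have "(cmod (X 2 1))\<^sup>2 \<le> (vn * J0 / \<epsilon>)\<^sup>2" using X21 off by linarith
  then have Xb: "cmod (X 2 1) \<le> vn * J0 / \<epsilon>"
    by (rule power2_le_imp_le) (use vn0 J00 eps0 in simp)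
  have R021: "?R0 2 1 = \<i> * complex_of_real (J0 / 2)" by (simp add: R0_def)
  have "Im (R 2 1) = J0 / 2 + Im (X 2 1)" unfolding X_def R021 by simp
  moreover have "Im (X 2 1) \<ge> - cmod (X 2 1)" using abs_Im_le_cmod[of "X 2 1"] by linarith
  ultimately have Jlow: "Jcur N v ail aol air aor (\<epsilon> * real N) \<ge> J0 - 2 * (vn * J0 / \<epsilon>)"
    unfolding J using Xb by linarith
  have tgt: "4 * D / den * (1 / 2 - 2 * vn * C' / \<epsilon>) = J0 - 4 * vn * C' * J0 / \<epsilon>"
    unfolding J0_def using eps0 den by (simp add: field_simps)
  have "4 * vn * C' * J0 / \<epsilon> \<ge> 2 * (vn * J0 / \<epsilon>)"
  proof -
    have "2 * (vn * J0) \<le> 4 * C' * (vn * J0)" using vn0 J00 C'4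
      by (intro mult_right_mono) auto
    then have "2 * (vn * J0) \<le> 4 * vn * C' * J0" by (simp add: ac_simps)
    then show ?thesis using eps0 by (simp add: divide_right_mono)
  qed
  then have part1: "Jcur N v ail aol air aor (\<epsilon> * real N) \<ge> 4 * D / den * (1 / 2 - 2 * vn * C' / \<epsilon>)"
    unfolding tgt using Jlow by linarith
  have "1 / 2 - 2 * vn * C' / \<epsilon> > 0" using eps eps0 by (simp add: field_simps)
  then have part2: "4 * D / den * (1 / 2 - 2 * vn * C' / \<epsilon>) > 0" using D den by simp
  show ?thesis using part1 part2 unfolding D_def den_def vn_def C'_def zl_def zr_def by (rule conjI)
qed

end
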